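(* For each $n\in\mathbb{N}$ let $A_n\subseteq\mathcal{R}$ be L-measurable, and suppose $\lim_{N\to\infty}M\big(\bigcup_{n=1}^N A_n\big)$ exists in $\mathcal{R}$. Then $\bigcup_{n=1}^\infty A_n$ is L-measurable.
   Context: $\mathcal{R}$ denotes the Levi-Civita field: functions $x:\mathbb{Q}\to\mathbb{R}$ with left-finite support, with componentwise addition and formal power series multiplication, ordered by $x>0$ iff $x\ne0$ and $x[\min\operatorname{supp}x]>0$; it is a non-Archimedean ordered field extension of $\mathbb{R}$, Cauchy complete in the order topology, in which all limits and series are taken (a series $\sum a_n$ converges iff $a_n\to0$). An interval is a set $[a,b],[a,b),(a,b]$ or $(a,b)$ with $a<b$ in $\mathcal{R}$, of length $l=b-a$. A cover of $A\subseteq\mathcal{R}$ is a sequence of intervals $(S_n)_{n\ge1}$ with $A\subseteq\bigcup_n S_n$ and $\sum_n l(S_n)$ convergent in $\mathcal{R}$. $A$ is called outer measurable if the infimum $\inf\{\sum_n l(S_n): (S_n)\text{ a cover of }A\}$ exists in $\mathcal{R}$; this infimum is then called the outer measure $M_u(A)$. An outer measurable set $A\subseteq\mathcal{R}$ is L-measurable if for every outer measurable $B\subseteq\mathcal{R}$ both $A\cap B$ and $A^c\cap B$ (where $A^c=\mathcal{R}\setminus A$) are outer measurable and $M_u(B)=M_u(A\cap B)+M_u(A^c\cap B)$; then its L-measure is $M(A):=M_u(A)$. Finite unions of L-measurable sets are L-measurable, so $M(\bigcup_{n=1}^N A_n)$ is defined. *)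

theory Defs
  imports Complex_Main
begin

text \<open>Elements: functions rat => real with left-finite support.
  Only the additive structure and the order enter the statement (lengths,
  sums of series, infima, limits), so multiplication is not needed.\<close>

typedef lc = "{x :: rat \<Rightarrow> real. \<forall>q. finite {r. r \<le> q \<and> x r \<noteq> 0}}"
  morphisms coeff Abs_lc
  by (rule exI[of _ "\<lambda>_. 0"]) auto

setup_lifting type_definition_lc

lemma lc_supp_combine:
  assumes hx: "\<forall>q. finite {r. r \<le> q \<and> x r \<noteq> 0}"
    and hy: "\<forall>q. finite {r. r \<le> q \<and> y r \<noteq> (0::real)}"
    and hf: "\<And>r. x r = 0 \<Longrightarrow> y r = 0 \<Longrightarrow> f r = 0"
  shows "\<forall>q. finite {r::rat. r \<le> q \<and> f r \<noteq> 0}"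
proof
  fix q
  have "{r. r \<le> q \<and> f r \<noteq> 0} \<subseteq> {r. r \<le> q \<and> x r \<noteq> 0} \<union> {r. r \<le> q \<and> y r \<noteq> 0}"
    using hf by auto
  then show "finite {r. r \<le> q \<and> f r \<noteq> 0}"
    using hx hy by (meson finite_Un finite_subset)
qed

instantiation lc :: ab_group_add
begin

lift_definition zero_lc :: lc is "\<lambda>_. 0" by auto

lift_definition plus_lc :: "lc \<Rightarrow> lc \<Rightarrow> lc" is "\<lambda>x y q. x q + y q"
  subgoal for x y q by (rule lc_supp_combine[of x y "\<lambda>r. x r + y r", rule_format]) auto
  done

lift_definition uminus_lc :: "lc \<Rightarrow> lc" is "\<lambda>x q. - x q" by simp

lift_definition minus_lc :: "lc \<Rightarrow> lc \<Rightarrow> lc" is "\<lambda>x y q. x q - y q"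
  subgoal for x y q by (rule lc_supp_combine[of x y "\<lambda>r. x r - y r", rule_format]) auto
  done

instance
  by standard (transfer; auto simp: algebra_simps)+

end

definition lc_pos :: "lc \<Rightarrow> bool" where
  "lc_pos x \<longleftrightarrow> x \<noteq> 0 \<and> coeff x (LEAST q. coeff x q \<noteq> 0) > 0"

definition lc_less :: "lc \<Rightarrow> lc \<Rightarrow> bool" where
  "lc_less x y \<longleftrightarrow> lc_pos (y - x)"

definition lc_le :: "lc \<Rightarrow> lc \<Rightarrow> bool" where
  "lc_le x y \<longleftrightarrow> x = y \<or> lc_less x y"

definition lc_tendsto :: "(nat \<Rightarrow> lc) \<Rightarrow> lc \<Rightarrow> bool" where
  "lc_tendsto X L \<longleftrightarrow>
     (\<forall>e. lc_pos e \<longrightarrow> (\<exists>N. \<forall>n\<ge>N. lc_less (X n - L) e \<and> lc_less (L - X n) e))"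

definition lc_sums :: "(nat \<Rightarrow> lc) \<Rightarrow> lc \<Rightarrow> bool" where
  "lc_sums a s \<longleftrightarrow> lc_tendsto (\<lambda>N. \<Sum>n<N. a n) s"

definition lc_suminf :: "(nat \<Rightarrow> lc) \<Rightarrow> lc" where
  "lc_suminf a = (THE s. lc_sums a s)"

definition lc_interval_len :: "lc set \<Rightarrow> lc \<Rightarrow> bool" where
  "lc_interval_len I l \<longleftrightarrow> (\<exists>a b. lc_less a b \<and> l = b - a \<and>
     (I = {x. lc_le a x \<and> lc_le x b} \<or> I = {x. lc_le a x \<and> lc_less x b} \<or>
      I = {x. lc_less a x \<and> lc_le x b} \<or> I = {x. lc_less a x \<and> lc_less x b}))"

definition lc_is_interval :: "lc set \<Rightarrow> bool" where
  "lc_is_interval I \<longleftrightarrow> (\<exists>l. lc_interval_len I l)"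

definition lc_length :: "lc set \<Rightarrow> lc" where
  "lc_length I = (THE l. lc_interval_len I l)"

definition lc_cover :: "(nat \<Rightarrow> lc set) \<Rightarrow> lc set \<Rightarrow> bool" where
  "lc_cover S A \<longleftrightarrow> (\<forall>n. lc_is_interval (S n)) \<and> A \<subseteq> (\<Union>n. S n) \<and>
     (\<exists>s. lc_sums (\<lambda>n. lc_length (S n)) s)"

definition lc_is_inf :: "lc set \<Rightarrow> lc \<Rightarrow> bool" where
  "lc_is_inf T m \<longleftrightarrow> (\<forall>t\<in>T. lc_le m t) \<and> (\<forall>m'. (\<forall>t\<in>T. lc_le m' t) \<longrightarrow> lc_le m' m)"

definition cover_sums :: "lc set \<Rightarrow> lc set" where
  "cover_sums A = {lc_suminf (\<lambda>n. lc_length (S n)) | S. lc_cover S A}"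

definition outer_measurable :: "lc set \<Rightarrow> bool" where
  "outer_measurable A \<longleftrightarrow> (\<exists>m. lc_is_inf (cover_sums A) m)"

definition outer_measure :: "lc set \<Rightarrow> lc" where
  "outer_measure A = (THE m. lc_is_inf (cover_sums A) m)"

definition L_measurable :: "lc set \<Rightarrow> bool" where
  "L_measurable A \<longleftrightarrow> outer_measurable A \<and>
     (\<forall>B. outer_measurable B \<longrightarrow>
        outer_measurable (A \<inter> B) \<and> outer_measurable (- A \<inter> B) \<and>
        outer_measure B = outer_measure (A \<inter> B) + outer_measure (- A \<inter> B))"

definition L_measure :: "lc set \<Rightarrow> lc" where
  "L_measure A = outer_measure A"

end

theory Submission
  imports Defs "HOL-Analysis.Continuum_Not_Denumerable"
begin


lemma coeff_add[simp]: "coeff (x + y) q = coeff x q + coeff y q"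
  by transfer simp
lemma coeff_diff[simp]: "coeff (x - y) q = coeff x q - coeff y q"
  by transfer simp
lemma coeff_uminus[simp]: "coeff (- x) q = - coeff x q"
  by transfer simp
lemma coeff_zero[simp]: "coeff 0 q = 0"
  by transfer simp
lemma coeff_sum: "coeff (sum f A) q = (\<Sum>i\<in>A. coeff (f i) q)"
  by (induction A rule: infinite_finite_induct) auto

lemma lc_eqI: "(\<And>q. coeff x q = coeff y q) \<Longrightarrow> x = y"
  by (metis coeff_inject ext)

lemma coeff_finite: "finite {r. r \<le> q \<and> coeff x r \<noteq> 0}"
  using coeff[of x] by auto

lemma lc_has_lead:
  assumes "x \<noteq> 0"
  shows "\<exists>p. coeff x p \<noteq> 0 \<and> (\<forall>r<p. coeff x r = 0)"
proof -
  obtain q0 where q0: "coeff x q0 \<noteq> 0"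
    using assms lc_eqI[of x 0] by auto
  define F where "F = {r. r \<le> q0 \<and> coeff x r \<noteq> 0}"
  have fin: "finite F" unfolding F_def by (rule coeff_finite)
  have ne: "q0 \<in> F" using q0 unfolding F_def by auto
  show ?thesis
  proof (intro exI conjI allI impI)
    show "coeff x (Min F) \<noteq> 0" using Min_in[OF fin] ne unfolding F_def by blast
    fix r assume "r < Min F"
    moreover have "Min F \<le> q0" using Min_le[OF fin ne] .
    ultimately show "coeff x r = 0"
      using Min_le[OF fin, of r] unfolding F_def by force
  qed
qed

definition lead :: "lc \<Rightarrow> rat" where "lead x = (LEAST q. coeff x q \<noteq> 0)"

lemma lead_eq:
  assumes "coeff x p \<noteq> 0" "\<forall>r<p. coeff x r = 0"
  shows "lead x = p"
  unfolding lead_def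
proof (rule Least_equality)
  show "coeff x p \<noteq> 0" by (rule assms(1))
  fix y assume "coeff x y \<noteq> 0"
  then show "p \<le> y" using assms(2) by (meson not_le)
qed

lemma lead_props:
  assumes "x \<noteq> 0"
  shows "coeff x (lead x) \<noteq> 0" "\<And>r. r < lead x \<Longrightarrow> coeff x r = 0"
  using lc_has_lead[OF assms] lead_eq by metis+

lemma pos_iff: "lc_pos x \<longleftrightarrow> (\<exists>q. 0 < coeff x q \<and> (\<forall>r<q. coeff x r = 0))"
proof
  assume "lc_pos x"
  then have "x \<noteq> 0" "coeff x (lead x) > 0" unfolding lc_pos_def lead_def by auto
  then show "\<exists>q. 0 < coeff x q \<and> (\<forall>r<q. coeff x r = 0)" using lead_props by blast
next
  assume "\<exists>q. 0 < coeff x q \<and> (\<forall>r<q. coeff x r = 0)"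
  then obtain q where q: "0 < coeff x q" "\<forall>r<q. coeff x r = 0" by blast
  then have "x \<noteq> 0" by auto
  moreover have "lead x = q" using q by (intro lead_eq) auto
  ultimately show "lc_pos x" using q unfolding lc_pos_def lead_def by simp
qed

lemma pos_lead_coeff: "lc_pos x \<Longrightarrow> coeff x p \<noteq> 0 \<Longrightarrow> \<forall>r<p. coeff x r = 0 \<Longrightarrow> coeff x p > 0"
proof -
  assume a: "lc_pos x" "coeff x p \<noteq> 0" "\<forall>r<p. coeff x r = 0"
  then obtain q where q: "0 < coeff x q" "\<forall>r<q. coeff x r = 0" unfolding pos_iff by blast
  have "p = q" using a q by (metis linorder_neqE less_irrefl)
  then show ?thesis using q by simp
qed

lemma pos_add: assumes "lc_pos x" "lc_pos y" shows "lc_pos (x + y)"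
proof -
  obtain p where p: "0 < coeff x p" "\<forall>r<p. coeff x r = 0" using assms(1) pos_iff by blast
  obtain q where q: "0 < coeff y q" "\<forall>r<q. coeff y r = 0" using assms(2) pos_iff by blast
  show ?thesis unfolding pos_iff
  proof (cases "p \<le> q")
    case True
    then have "coeff y p \<ge> 0" using q by (cases "p = q") auto
    then show "\<exists>q. 0 < coeff (x + y) q \<and> (\<forall>r<q. coeff (x + y) r = 0)"
      using p q True by (intro exI[of _ p]) auto
  next
    case False
    then have "coeff x q \<ge> 0" using p by auto
    then show "\<exists>q. 0 < coeff (x + y) q \<and> (\<forall>r<q. coeff (x + y) r = 0)"
      using p q False by (intro exI[of _ q]) auto
  qed
qed

lemma pos_neg: assumes "lc_pos x" shows "\<not> lc_pos (- x)"
proof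
  assume "lc_pos (- x)"
  then obtain q where q: "0 < coeff (-x) q" "\<forall>r<q. coeff (-x) r = 0" unfolding pos_iff by blast
  obtain p where p: "0 < coeff x p" "\<forall>r<p. coeff x r = 0" using assms pos_iff by blast
  show False
  proof (cases p q rule: linorder_cases)
    case less then show ?thesis using p q by auto
  next
    case equal then show ?thesis using p q by auto
  next
    case greater then show ?thesis using p q by auto
  qed
qed

lemma pos_total: assumes "x \<noteq> 0" shows "lc_pos x \<or> lc_pos (- x)"
proof -
  obtain p where p: "coeff x p \<noteq> 0" "\<forall>r<p. coeff x r = 0" using lc_has_lead[OF assms] by blast
  show ?thesis
  proof (cases "coeff x p > 0")
    case True then show ?thesis using p unfolding pos_iff by blast
  next
    case False then have "coeff (-x) p > 0" using p by auto
    then show ?thesis using p unfolding pos_iff by (intro disjI2 exI[of _ p]) auto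
  qed
qed

lemma pos_nz: "lc_pos x \<Longrightarrow> x \<noteq> 0"
  unfolding lc_pos_def by simp

lemma pos_swap: "lc_pos (x - y) \<Longrightarrow> \<not> lc_pos (y - x)"
  using pos_neg[of "x - y"] by simp

lemma pos_trans: "lc_pos (y - x) \<Longrightarrow> lc_pos (z - y) \<Longrightarrow> lc_pos (z - x)"
proof -
  assume a: "lc_pos (y - x)" "lc_pos (z - y)"
  have "z - x = (y - x) + (z - y)" by simp
  then show ?thesis using pos_add[OF a] by simp
qed

lemma pos_tot: "x \<noteq> y \<Longrightarrow> lc_pos (y - x) \<or> lc_pos (x - y)"
  using pos_total[of "y - x"] by simp

lemma ord1: "lc_less x y = (lc_le x y \<and> \<not> lc_le y x)"
  unfolding lc_le_def lc_less_def
proof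
  assume a: "lc_pos (y - x)"
  then have "x \<noteq> y" using pos_nz by force
  moreover have "\<not> lc_pos (x - y)" using pos_swap[OF a] .
  ultimately show "(x = y \<or> lc_pos (y - x)) \<and> \<not> (y = x \<or> lc_pos (x - y))" using a by simp
qed blast

lemma ord2: "lc_le x y \<Longrightarrow> lc_le y z \<Longrightarrow> lc_le x z"
  unfolding lc_le_def lc_less_def
proof -
  assume a: "x = y \<or> lc_pos (y - x)" "y = z \<or> lc_pos (z - y)"
  show "x = z \<or> lc_pos (z - x)"
  proof (cases "x = y")
    case True then show ?thesis using a(2) by simp
  next
    case False
    then have p: "lc_pos (y - x)" using a(1) by simp
    show ?thesis
    proof (cases "y = z")
      case True then show ?thesis using p by simp
    next
      case False then show ?thesis using a(2) pos_trans[OF p] by simp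
    qed
  qed
qed

lemma ord3: "lc_le x y \<Longrightarrow> lc_le y x \<Longrightarrow> x = y"
  unfolding lc_le_def lc_less_def using pos_swap[of y x] by blast

lemma ord4: "lc_le x y \<Longrightarrow> lc_le (z + x) (z + y)"
  unfolding lc_le_def lc_less_def by simp

lemma ord5: "lc_le x y \<or> lc_le y x"
  unfolding lc_le_def lc_less_def using pos_tot[of x y] by blast

instantiation lc :: linordered_ab_group_add
begin
definition less_eq_lc :: "lc \<Rightarrow> lc \<Rightarrow> bool" where "less_eq_lc = lc_le"
definition less_lc :: "lc \<Rightarrow> lc \<Rightarrow> bool" where "less_lc = lc_less"
instance
proof
  fix x y z :: lc
  show "(x < y) = (x \<le> y \<and> \<not> y \<le> x)"
    unfolding less_eq_lc_def less_lc_def by (rule ord1)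
  show "x \<le> x" unfolding less_eq_lc_def lc_le_def by simp
  show "x \<le> y \<Longrightarrow> y \<le> z \<Longrightarrow> x \<le> z"
    unfolding less_eq_lc_def by (rule ord2)
  show "x \<le> y \<Longrightarrow> y \<le> x \<Longrightarrow> x = y"
    unfolding less_eq_lc_def by (rule ord3)
  show "x \<le> y \<Longrightarrow> z + x \<le> z + y"
    unfolding less_eq_lc_def by (rule ord4)
  show "x \<le> y \<or> y \<le> x"
    unfolding less_eq_lc_def by (rule ord5)
qed
end

lemma lc_less_iff[simp]: "lc_less x y \<longleftrightarrow> x < y" unfolding less_lc_def by (rule refl)
lemma lc_le_iff[simp]: "lc_le x y \<longleftrightarrow> x \<le> y" unfolding less_eq_lc_def by (rule refl)
lemma lc_pos_iff[simp]: "lc_pos x \<longleftrightarrow> 0 < x"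
  unfolding less_lc_def lc_less_def by simp



lemma mon_aux: "finite {r::rat. r \<le> q' \<and> (if r = q then c else (0::real)) \<noteq> 0}"
  by (rule finite_subset[of _ "{q}"]) auto

lift_definition mon :: "real \<Rightarrow> rat \<Rightarrow> lc" is "\<lambda>c q r. if r = q then c else 0"
  using mon_aux by blast

lemma coeff_mon: "coeff (mon c q) r = (if r = q then c else 0)"
  by transfer simp

definition sm :: "rat \<Rightarrow> lc \<Rightarrow> bool" where "sm q x \<longleftrightarrow> (\<forall>r\<le>q. coeff x r = 0)"

lemma sm_zero[simp]: "sm q 0" unfolding sm_def by simp
lemma sm_add: "sm q x \<Longrightarrow> sm q y \<Longrightarrow> sm q (x + y)" unfolding sm_def by simp
lemma sm_diff: "sm q x \<Longrightarrow> sm q y \<Longrightarrow> sm q (x - y)" unfolding sm_def by simp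
lemma sm_uminus[simp]: "sm q (- x) \<longleftrightarrow> sm q x" unfolding sm_def by simp
lemma sm_minus_commute: "sm q (x - y) \<longleftrightarrow> sm q (y - x)"
  using sm_uminus[of q "x - y"] by simp
lemma sm_sum: "(\<And>i. i \<in> A \<Longrightarrow> sm q (f i)) \<Longrightarrow> sm q (sum f A)"
  unfolding sm_def by (simp add: coeff_sum)
lemma sm_le_q: "q' \<le> q \<Longrightarrow> sm q x \<Longrightarrow> sm q' x" unfolding sm_def by simp

lemma gt_pos_iff: "x < y \<longleftrightarrow> lc_pos (y - x)"
  unfolding less_lc_def lc_less_def by (rule refl)

lemma pos_lead: "0 < e \<Longrightarrow> 0 < coeff e (lead e) \<and> (\<forall>r<lead e. coeff e r = 0)"
proof -
  assume "0 < e"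
  then have p: "lc_pos e" by simp
  then have "e \<noteq> 0" by (rule pos_nz)
  then show ?thesis using lead_props[of e] pos_lead_coeff[OF p, of "lead e"] by auto
qed

lemma coeff_pos_less: "0 < coeff (y - x) q \<Longrightarrow> (\<forall>r<q. coeff (y - x) r = 0) \<Longrightarrow> x < y"
  unfolding gt_pos_iff pos_iff by (rule exI[of _ q]) simp

lemma sm_less: assumes "sm q x" "0 < e" "lead e \<le> q" shows "x < e"
proof (rule coeff_pos_less[of _ _ "lead e"])
  show "0 < coeff (e - x) (lead e)" using pos_lead[OF assms(2)] assms(1,3) unfolding sm_def by simp
  show "\<forall>r<lead e. coeff (e - x) r = 0" using pos_lead[OF assms(2)] assms(1,3) unfolding sm_def by simp
qed

lemma sm_lead: "sm (lead e) x \<Longrightarrow> 0 < e \<Longrightarrow> x < e"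
  using sm_less by blast

lemma mon_pos: "0 < c \<Longrightarrow> 0 < mon c q"
  by (rule coeff_pos_less[of _ _ q]) (auto simp: coeff_mon)

lemma sm_mon: "q' < q \<Longrightarrow> sm q' (mon c q)"
  unfolding sm_def coeff_mon by auto

lemma not_sm_mon: "c \<noteq> 0 \<Longrightarrow> \<not> sm q (mon c q)"
  unfolding sm_def coeff_mon by auto

lemma sm_convex:
  assumes "0 \<le> a" "a \<le> s" "sm q s" shows "sm q a"
proof (rule ccontr)
  assume "\<not> sm q a"
  then obtain r where r: "r \<le> q" "coeff a r \<noteq> 0" unfolding sm_def by auto
  then have "a \<noteq> 0" by auto
  then have ap: "0 < a" using assms(1) by simp
  define p where "p = lead a"
  have pa: "0 < coeff a p" "\<forall>r<p. coeff a r = 0" using pos_lead[OF ap] p_def by auto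
  have "p \<le> r" using pa(2) r by (meson not_le)
  then have pq: "p \<le> q" using r(1) by simp
  show False
  proof (cases "s = a")
    case True then show False using assms(3) r unfolding sm_def by auto
  next
    case False
    then have sp: "0 < s - a" using assms(2) by simp
    define p' where "p' = lead (s - a)"
    have sp': "0 < coeff (s - a) p'" "\<forall>r<p'. coeff (s - a) r = 0" using pos_lead[OF sp] p'_def by auto
    have "s = a + (s - a)" by simp
    show False
    proof (cases "p' < p")
      case True
      then have "coeff s p' = coeff (s - a) p'" using pa by simp
      then show False using sp' assms(3) pq True unfolding sm_def by auto
    next
      case False
      then have "coeff (s - a) p \<ge> 0" using sp' by (cases "p = p'") auto
      moreover have "coeff s p = coeff a p + coeff (s - a) p" by simp
      ultimately have "coeff s p > 0" using pa(1) by linarith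
      then show False using assms(3) pq unfolding sm_def by auto
    qed
  qed
qed

definition eps :: "lc \<Rightarrow> lc" where "eps e = mon 1 (lead e + 1)"

lemma eps_pos: "0 < eps e" unfolding eps_def by (rule mon_pos) simp

lemma eps_sm: "sm (lead e) (eps e)" unfolding eps_def by (rule sm_mon) simp

lemma eps3: "0 < e \<Longrightarrow> eps e + eps e + eps e < e"
  by (rule sm_lead) (auto intro!: sm_add eps_sm)

lemma eps2: "0 < e \<Longrightarrow> eps e + eps e < e"
  by (rule sm_lead) (auto intro!: sm_add eps_sm)

lemma eps1: "0 < e \<Longrightarrow> eps e < e"
  by (rule sm_lead) (auto intro!: sm_add eps_sm)

lemma le_of_all_eps: fixes x y :: lc assumes "\<And>e. 0 < e \<Longrightarrow> x \<le> y + e" shows "x \<le> y"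
proof (rule ccontr)
  assume "\<not> x \<le> y"
  then have d: "0 < x - y" by simp
  have "x \<le> y + eps (x - y)" using assms eps_pos by blast
  moreover have "eps (x - y) < x - y" using eps1[OF d] .
  then have "y + eps (x - y) < y + (x - y)" by (rule add_strict_left_mono)
  ultimately show False by simp
qed

lemma pos_exists_sm: "0 < e \<Longrightarrow> \<exists>q. \<forall>x. sm q x \<longrightarrow> x < e \<and> - x < e"
proof -
  assume "0 < e"
  then show ?thesis using sm_lead[of e] sm_uminus[of "lead e"] by blast
qed

lemma less_mon_sm:
  assumes "x < mon 1 (q + 1)" "- x < mon 1 (q + 1)" shows "sm q x"
proof (rule ccontr)
  assume ns: "\<not> sm q x"
  then have "x \<noteq> 0" by auto
  have key2: "sm q y" if "0 < y" "y < mon 1 (q + 1)" for y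
  proof (rule ccontr)
    assume "\<not> sm q y"
    have py: "0 < coeff y (lead y)" "\<forall>r<lead y. coeff y r = 0" using pos_lead[OF that(1)] by auto
    have lq: "lead y \<le> q" using \<open>\<not> sm q y\<close> py unfolding sm_def by (meson le_less_trans not_le)
    have "y < mon 1 (q + 1)" by fact
    moreover have "mon 1 (q + 1) < y"
    proof (rule coeff_pos_less[of _ _ "lead y"])
      show "0 < coeff (y - mon 1 (q + 1)) (lead y)" using py lq by (simp add: coeff_mon)
      show "\<forall>r<lead y. coeff (y - mon 1 (q + 1)) r = 0" using py lq by (simp add: coeff_mon)
    qed
    ultimately show False by simp
  qed
  show False
  proof (cases "0 < x")
    case True then show False using key2 assms ns by blast
  next
    case False
    then have "0 < - x" using \<open>x \<noteq> 0\<close> by simp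
    then show False using key2[of "- x"] assms ns by simp
  qed
qed



definition conv :: "(nat \<Rightarrow> lc) \<Rightarrow> lc \<Rightarrow> bool" where
  "conv X L \<longleftrightarrow> (\<forall>q. \<exists>N. \<forall>n\<ge>N. sm q (X n - L))"

lemma tendsto_iff: "lc_tendsto X L \<longleftrightarrow> conv X L"
proof
  assume a: "lc_tendsto X L"
  show "conv X L" unfolding conv_def
  proof
    fix q
    have "lc_pos (mon 1 (q + 1))" using mon_pos[of 1 "q + 1"] by simp
    then obtain N where N: "\<forall>n\<ge>N. X n - L < mon 1 (q + 1) \<and> L - X n < mon 1 (q + 1)"
      using a unfolding lc_tendsto_def by auto
    show "\<exists>N. \<forall>n\<ge>N. sm q (X n - L)"
    proof (intro exI allI impI)
      fix n assume "N \<le> n"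
      then show "sm q (X n - L)" using N by (intro less_mon_sm) auto
    qed
  qed
next
  assume c: "conv X L"
  show "lc_tendsto X L" unfolding lc_tendsto_def
  proof (intro allI impI)
    fix e assume "lc_pos e"
    then have e: "0 < e" by simp
    obtain N where N: "\<forall>n\<ge>N. sm (lead e) (X n - L)" using c unfolding conv_def by blast
    show "\<exists>N. \<forall>n\<ge>N. lc_less (X n - L) e \<and> lc_less (L - X n) e"
    proof (intro exI allI impI)
      fix n assume "N \<le> n"
      then have "sm (lead e) (X n - L)" "sm (lead e) (L - X n)" using N sm_minus_commute by auto
      then show "lc_less (X n - L) e \<and> lc_less (L - X n) e" using sm_lead e by simp
    qed
  qed
qed

lemma conv_unique: assumes "conv X L" "conv X L'" shows "L = L'"
proof (rule lc_eqI)
  fix r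
  obtain N where N: "\<forall>n\<ge>N. sm r (X n - L)" using assms(1) unfolding conv_def by blast
  obtain N' where N': "\<forall>n\<ge>N'. sm r (X n - L')" using assms(2) unfolding conv_def by blast
  have h1: "sm r (X (max N N') - L')" using N' by simp
  have h2: "sm r (X (max N N') - L)" using N by simp
  have "sm r ((X (max N N') - L') - (X (max N N') - L))" by (rule sm_diff[OF h1 h2])
  then have "coeff (L - L') r = 0" unfolding sm_def by simp
  then show "coeff L r = coeff L' r" by simp
qed

lemma sums_iff: "lc_sums a s \<longleftrightarrow> conv (\<lambda>N. \<Sum>n<N. a n) s"
  unfolding lc_sums_def tendsto_iff ..

lemma suminf_eq: "lc_sums a s \<Longrightarrow> lc_suminf a = s"
  unfolding lc_suminf_def using conv_unique sums_iff by blast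

lemma conv_le: assumes "conv X L" "\<forall>n\<ge>N0. X n \<le> c" shows "L \<le> c"
proof (rule ccontr)
  assume "\<not> L \<le> c"
  then have e: "0 < L - c" by simp
  obtain N where N: "\<forall>n\<ge>N. sm (lead (L - c)) (X n - L)" using assms(1) unfolding conv_def by blast
  have "sm (lead (L - c)) (L - X (max N N0))" using N sm_minus_commute by auto
  then have "L - X (max N N0) < L - c" using sm_lead e by blast
  then have "c < X (max N N0)" by simp
  then show False using assms(2) by (meson max.cobounded2 not_le)
qed

lemma conv_ge: assumes "conv X L" "\<forall>n\<ge>N0. c \<le> X n" shows "c \<le> L"
proof (rule ccontr)
  assume "\<not> c \<le> L"
  then have e: "0 < c - L" by simp
  obtain N where N: "\<forall>n\<ge>N. sm (lead (c - L)) (X n - L)" using assms(1) unfolding conv_def by blast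
  have "X (max N N0) - L < c - L" using N sm_lead e by auto
  then have "X (max N N0) < c" by simp
  then show False using assms(2) by (meson max.cobounded2 not_le)
qed

lemma conv_add: assumes "conv X L" "conv Y M" shows "conv (\<lambda>n. X n + Y n) (L + M)"
  unfolding conv_def
proof
  fix q
  obtain N where N: "\<forall>n\<ge>N. sm q (X n - L)" using assms(1) unfolding conv_def by blast
  obtain N' where N': "\<forall>n\<ge>N'. sm q (Y n - M)" using assms(2) unfolding conv_def by blast
  show "\<exists>N. \<forall>n\<ge>N. sm q (X n + Y n - (L + M))"
  proof (intro exI allI impI)
    fix n assume "max N N' \<le> n"
    then have "sm q ((X n - L) + (Y n - M))" using N N' by (intro sm_add) auto
    then show "sm q (X n + Y n - (L + M))" by (simp add: algebra_simps)
  qed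
qed

lemma conv_sm: assumes "conv X L" "\<forall>n\<ge>N0. sm q (X n)" shows "sm q L"
proof -
  obtain N where N: "\<forall>n\<ge>N. sm q (X n - L)" using assms(1) unfolding conv_def by blast
  have h1: "sm q (X (max N N0))" using assms(2) by simp
  have h2: "sm q (X (max N N0) - L)" using N by simp
  have "sm q (X (max N N0) - (X (max N N0) - L))" by (rule sm_diff[OF h1 h2])
  then show ?thesis by simp
qed

lemma sums_terms: assumes "lc_sums a s" shows "\<forall>q. \<exists>N. \<forall>n\<ge>N. sm q (a n)"
proof
  fix q
  obtain N where N: "\<forall>n\<ge>N. sm q ((\<Sum>k<n. a k) - s)" using assms unfolding sums_iff conv_def by blast
  show "\<exists>N. \<forall>n\<ge>N. sm q (a n)"
  proof (intro exI allI impI)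
    fix n assume "N \<le> n"
    then have h1: "sm q ((\<Sum>k<Suc n. a k) - s)" "sm q ((\<Sum>k<n. a k) - s)"
      using N[rule_format, of "Suc n"] N[rule_format, of n] by auto
    have "a n = ((\<Sum>k<Suc n. a k) - s) - ((\<Sum>k<n. a k) - s)" by simp
    then show "sm q (a n)" using sm_diff[OF h1] by simp
  qed
qed

lemma complete_series:
  assumes "\<forall>q. \<exists>N. \<forall>n\<ge>N. sm q (a n)"
  shows "\<exists>s. lc_sums a s"
proof -
  define P where "P n = (\<Sum>k<n. a k)" for n
  define Nq where "Nq q = (LEAST N. \<forall>n\<ge>N. sm q (a n))" for q
  have Nq: "\<forall>n\<ge>Nq q. sm q (a n)" for q
  proof -
    obtain N where "\<forall>n\<ge>N. sm q (a n)" using assms by blast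
    then show ?thesis unfolding Nq_def by (rule LeastI)
  qed
  have Nq_mono: "Nq q' \<le> Nq q" if "q' \<le> q" for q q'
  proof -
    have "\<forall>n\<ge>Nq q. sm q' (a n)" using Nq[of q] sm_le_q[OF that] by blast
    then show ?thesis unfolding Nq_def[of q'] by (rule Least_le)
  qed
  have Pdiff: "sm q (P m - P n)" if "Nq q \<le> n" "n \<le> m" for q n m
  proof -
    have "(\<Sum>k\<in>{0..<n}. a k) + (\<Sum>k\<in>{n..<m}. a k) = (\<Sum>k\<in>{0..<m}. a k)"
      by (rule sum.atLeastLessThan_concat) (use that(2) in auto)
    then have "P m - P n = (\<Sum>k\<in>{n..<m}. a k)"
      unfolding P_def by (simp add: lessThan_atLeast0 algebra_simps)
    then show ?thesis using Nq[of q] that by (auto intro!: sm_sum)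
  qed
  define f where "f r = coeff (P (Nq r)) r" for r
  have fq: "f r = coeff (P (Nq q)) r" if "r \<le> q" for r q
  proof -
    have "sm r (P (Nq q) - P (Nq r))" using Nq_mono[OF that] by (intro Pdiff) auto
    then show ?thesis unfolding f_def sm_def by simp
  qed
  have fin: "\<forall>q. finite {r. r \<le> q \<and> f r \<noteq> 0}"
  proof
    fix q
    have "{r. r \<le> q \<and> f r \<noteq> 0} \<subseteq> {r. r \<le> q \<and> coeff (P (Nq q)) r \<noteq> 0}" using fq by auto
    then show "finite {r. r \<le> q \<and> f r \<noteq> 0}" using coeff_finite by (rule finite_subset)
  qed
  define s where "s = Abs_lc f"
  have cs: "coeff s = f" unfolding s_def using fin by (simp add: Abs_lc_inverse)
  have "conv P s" unfolding conv_def
  proof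
    fix q
    show "\<exists>N. \<forall>n\<ge>N. sm q (P n - s)"
    proof (intro exI allI impI)
      fix n assume n: "Nq q \<le> n"
      show "sm q (P n - s)" unfolding sm_def
      proof (intro allI impI)
        fix r assume r: "r \<le> q"
        have "sm r (P n - P (Nq r))" using Nq_mono[OF r] n by (intro Pdiff) auto
        then show "coeff (P n - s) r = 0" unfolding sm_def by (simp add: cs f_def)
      qed
    qed
  qed
  then show ?thesis unfolding sums_iff P_def by blast
qed

lemma sums_partial_le:
  assumes "lc_sums a s" "\<forall>n. 0 \<le> a n"
  shows "(\<Sum>k<N. a k) \<le> s"
proof (rule conv_ge[of "\<lambda>n. \<Sum>k<n. a k" s N])
  show "conv (\<lambda>n. \<Sum>k<n. a k) s" using assms(1) unfolding sums_iff .
  show "\<forall>n\<ge>N. (\<Sum>k<N. a k) \<le> (\<Sum>k<n. a k)"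
    using assms(2) by (auto intro!: sum_mono2)
qed

lemma sums_nonneg: "lc_sums a s \<Longrightarrow> \<forall>n. 0 \<le> a n \<Longrightarrow> 0 \<le> s"
  using sums_partial_le[of a s 0] by simp

lemma sums_le_bound:
  assumes "lc_sums a s" "\<forall>N. (\<Sum>k<N. a k) \<le> c"
  shows "s \<le> c"
  using assms unfolding sums_iff by (intro conv_le[of _ _ 0]) auto

lemma complete_seq:
  assumes "\<forall>q. \<exists>N. \<forall>n\<ge>N. sm q (x (Suc n) - x n)"
  shows "\<exists>L. conv x L"
proof -
  obtain s where s: "lc_sums (\<lambda>n. x (Suc n) - x n) s" using complete_series[OF assms] by blast
  have "conv (\<lambda>n. (\<Sum>k<n. x (Suc k) - x k) + x 0) (s + x 0)"
    using s unfolding sums_iff by (intro conv_add) (auto simp: conv_def)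
  moreover have "(\<Sum>k<n. x (Suc k) - x k) + x 0 = x n" for n
  proof (induction n)
    case (Suc n)
    have "(\<Sum>k<Suc n. x (Suc k) - x k) + x 0 = ((\<Sum>k<n. x (Suc k) - x k) + x 0) + (x (Suc n) - x n)"
      by (simp add: algebra_simps)
    then show ?case using Suc by simp
  qed simp
  ultimately show ?thesis by auto
qed



lemma dense_lc: assumes "a < (b::lc)" shows "\<exists>x. a < x \<and> x < b"
proof -
  define p where "p = lead (b - a)"
  define c where "c = coeff (b - a) p"
  have d: "0 < b - a" using assms by simp
  have pc: "0 < c" "\<forall>r<p. coeff (b - a) r = 0" using pos_lead[OF d] unfolding p_def c_def by auto
  have "a < a + mon (c/2) p" using mon_pos[of "c/2" p] pc by simp
  moreover have "a + mon (c/2) p < b"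
  proof (rule coeff_pos_less[of _ _ p])
    show "0 < coeff (b - (a + mon (c / 2) p)) p" using pc unfolding c_def by (simp add: coeff_mon field_simps)
    show "\<forall>r<p. coeff (b - (a + mon (c / 2) p)) r = 0" using pc by (simp add: coeff_mon)
  qed
  ultimately show ?thesis by blast
qed

definition betw :: "lc \<Rightarrow> lc \<Rightarrow> lc set \<Rightarrow> bool" where
  "betw a b I \<longleftrightarrow> (\<forall>x. a < x \<and> x < b \<longrightarrow> x \<in> I) \<and> (\<forall>x\<in>I. a \<le> x \<and> x \<le> b)"

lemma betw_left: assumes "betw a b I" "betw a' b' I" "a < b" "a' < b'" shows "a \<le> a'"
proof (rule ccontr)
  assume "\<not> a \<le> a'"
  then have "a' < min a b'" using assms(4) by simp
  then obtain x where x: "a' < x" "x < min a b'" using dense_lc by blast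
  then have "x \<in> I" using assms(2) unfolding betw_def by auto
  then show False using assms(1) x unfolding betw_def by auto
qed

lemma betw_right: assumes "betw a b I" "betw a' b' I" "a < b" "a' < b'" shows "b' \<le> b"
proof (rule ccontr)
  assume "\<not> b' \<le> b"
  then have "max a' b < b'" using assms(3,4) by simp
  then obtain x where x: "max a' b < x" "x < b'" using dense_lc by blast
  then have "x \<in> I" using assms(2) unfolding betw_def by auto
  then show False using assms(1) x unfolding betw_def by auto
qed

lemma betw_unique: assumes "betw a b I" "betw a' b' I" "a < b" "a' < b'" shows "a = a' \<and> b = b'"
  using betw_left[OF assms] betw_left[OF assms(2,1,4,3)] betw_right[OF assms] betw_right[OF assms(2,1,4,3)]
  by simp

lemma interval_len_betw:
  assumes "lc_interval_len I l" shows "\<exists>a b. a < b \<and> l = b - a \<and> betw a b I"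
proof -
  obtain a b where ab: "a < b" "l = b - a"
    "I = {x. a \<le> x \<and> x \<le> b} \<or> I = {x. a \<le> x \<and> x < b} \<or>
      I = {x. a < x \<and> x \<le> b} \<or> I = {x. a < x \<and> x < b}"
    using assms unfolding lc_interval_len_def by auto
  have "betw a b I" using ab(3) unfolding betw_def by (elim disjE) auto
  then show ?thesis using ab by blast
qed

lemma length_eq: assumes "lc_interval_len I l" shows "lc_length I = l"
  unfolding lc_length_def
proof (rule the_equality)
  show "lc_interval_len I l" by fact
  fix l' assume "lc_interval_len I l'"
  then obtain a' b' where 1: "a' < b'" "l' = b' - a'" "betw a' b' I" using interval_len_betw by blast
  obtain a b where 2: "a < b" "l = b - a" "betw a b I" using assms interval_len_betw by blast
  show "l' = l" using betw_unique[OF 1(3) 2(3) 1(1) 2(1)] 1 2 by simp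
qed

lemma interval_props: assumes "lc_is_interval I"
  shows "\<exists>a b. a < b \<and> lc_length I = b - a \<and> betw a b I"
proof -
  obtain l where l: "lc_interval_len I l" using assms unfolding lc_is_interval_def by blast
  then show ?thesis using length_eq[OF l] interval_len_betw[OF l] by blast
qed

lemma length_pos: "lc_is_interval I \<Longrightarrow> 0 < lc_length I"
  using interval_props by fastforce

lemma length_nonneg: "lc_is_interval I \<Longrightarrow> 0 \<le> lc_length I"
  using length_pos by fastforce

lemma length_diff: assumes "lc_is_interval I" "x \<in> I" "y \<in> I" shows "x - y \<le> lc_length I"
proof -
  obtain a b where "a < b" "lc_length I = b - a" "betw a b I" using interval_props[OF assms(1)] by blast
  then show ?thesis using assms unfolding betw_def
    by (metis diff_mono)
qed

lemma closed_interval: assumes "a < b"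
  shows "lc_is_interval {x. a \<le> x \<and> x \<le> b}" "lc_length {x. a \<le> x \<and> x \<le> b} = b - a"
proof -
  have "lc_interval_len {x. a \<le> x \<and> x \<le> b} (b - a)"
    unfolding lc_interval_len_def using assms by (intro exI[of _ a] exI[of _ b]) auto
  then show "lc_is_interval {x. a \<le> x \<and> x \<le> b}" "lc_length {x. a \<le> x \<and> x \<le> b} = b - a"
    unfolding lc_is_interval_def using length_eq by auto
qed



abbreviation len :: "lc set \<Rightarrow> lc" where "len \<equiv> lc_length"

lemma cs_intro: "lc_cover S A \<Longrightarrow> lc_sums (\<lambda>n. len (S n)) t \<Longrightarrow> t \<in> cover_sums A"
  unfolding cover_sums_def using suminf_eq by fastforce

lemma cs_elim: assumes "t \<in> cover_sums A"
  obtains S where "lc_cover S A" "lc_sums (\<lambda>n. len (S n)) t"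
proof -
  obtain S where S: "t = lc_suminf (\<lambda>n. len (S n))" "lc_cover S A" using assms unfolding cover_sums_def by blast
  then obtain s where s: "lc_sums (\<lambda>n. len (S n)) s" unfolding lc_cover_def by blast
  then have "t = s" using S suminf_eq by simp
  then show ?thesis using that S s by blast
qed

lemma cover_nonneg: "lc_cover S A \<Longrightarrow> 0 \<le> len (S n)"
  unfolding lc_cover_def using length_nonneg by blast

lemma cs_nonneg: "t \<in> cover_sums A \<Longrightarrow> 0 \<le> t"
  by (erule cs_elim) (use sums_nonneg cover_nonneg in blast)

lemma cs_mono: "A \<subseteq> B \<Longrightarrow> cover_sums B \<subseteq> cover_sums A"
  unfolding cover_sums_def lc_cover_def by blast

lemma is_inf_iff: "lc_is_inf T m \<longleftrightarrow> (\<forall>t\<in>T. m \<le> t) \<and> (\<forall>e>0. \<exists>t\<in>T. t < m + e)"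
proof
  assume a: "lc_is_inf T m"
  show "(\<forall>t\<in>T. m \<le> t) \<and> (\<forall>e>0. \<exists>t\<in>T. t < m + e)"
  proof (intro conjI allI impI)
    fix e :: lc assume e: "0 < e"
    show "\<exists>t\<in>T. t < m + e"
    proof (rule ccontr)
      assume "\<not> (\<exists>t\<in>T. t < m + e)"
      then have "\<forall>t\<in>T. lc_le (m + e) t" by (simp add: not_less)
      moreover have "\<forall>m'. (\<forall>t\<in>T. lc_le m' t) \<longrightarrow> lc_le m' m" using a unfolding lc_is_inf_def by blast
      ultimately have "lc_le (m + e) m" by blast
      then have "m + e \<le> m" by simp
      then show False using e by simp
    qed
  qed (use a in \<open>auto simp: lc_is_inf_def\<close>)
next
  assume a: "(\<forall>t\<in>T. m \<le> t) \<and> (\<forall>e>0. \<exists>t\<in>T. t < m + e)"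
  show "lc_is_inf T m" unfolding lc_is_inf_def
  proof (intro conjI allI impI ballI)
    fix m' assume m': "\<forall>t\<in>T. lc_le m' t"
    show "lc_le m' m"
    proof (rule ccontr)
      assume "\<not> lc_le m' m"
      then have "0 < m' - m" by simp
      then obtain t where t: "t \<in> T" "t < m + (m' - m)" using a by blast
      then have "t < m'" by simp
      moreover have "m' \<le> t" using m' t(1) by simp
      ultimately show False by simp
    qed
  qed (use a in auto)
qed

lemma is_inf_unique: "lc_is_inf T m \<Longrightarrow> lc_is_inf T m' \<Longrightarrow> m = m'"
  unfolding lc_is_inf_def by (meson antisym lc_le_iff)

lemma om_inf: "outer_measurable A \<Longrightarrow> lc_is_inf (cover_sums A) (outer_measure A)"
  unfolding outer_measurable_def outer_measure_def by (metis is_inf_unique theI)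

lemma inf_M: "lc_is_inf (cover_sums A) m \<Longrightarrow> outer_measurable A \<and> outer_measure A = m"
  unfolding outer_measurable_def outer_measure_def using is_inf_unique by blast

lemma M_le: "outer_measurable A \<Longrightarrow> t \<in> cover_sums A \<Longrightarrow> outer_measure A \<le> t"
  using om_inf is_inf_iff by blast

lemma M_approx: "outer_measurable A \<Longrightarrow> 0 < e \<Longrightarrow> \<exists>t\<in>cover_sums A. t < outer_measure A + e"
  using om_inf is_inf_iff by blast

lemma M_nonneg: assumes "outer_measurable A" shows "0 \<le> outer_measure A"
proof -
  have "\<forall>t\<in>cover_sums A. lc_le 0 t" using cs_nonneg by simp
  then show ?thesis using om_inf[OF assms] unfolding lc_is_inf_def by simp
qed

lemma M_mono: assumes "outer_measurable A" "outer_measurable B" "A \<subseteq> B"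
  shows "outer_measure A \<le> outer_measure B"
proof (rule le_of_all_eps)
  fix e :: lc assume "0 < e"
  then obtain t where t: "t \<in> cover_sums B" "t < outer_measure B + e" using M_approx assms(2) by blast
  then have "t \<in> cover_sums A" using cs_mono[OF assms(3)] by blast
  then show "outer_measure A \<le> outer_measure B + e" using M_le[OF assms(1)] t by fastforce
qed

lemma term_le_sum: assumes "lc_sums a s" "\<forall>n. 0 \<le> a n" shows "a i \<le> s"
proof -
  have "a i \<le> (\<Sum>k<Suc i. a k)" using assms(2) by (simp add: sum_nonneg)
  also have "\<dots> \<le> s" by (rule sums_partial_le[OF assms])
  finally show ?thesis .
qed

lemma finite_nat_bound: "finite (B::nat set) \<Longrightarrow> \<exists>J. \<forall>j\<ge>J. j \<notin> B"
  by (metis finite_nat_set_iff_bounded not_less)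

lemma merge_covers:
  fixes S :: "nat \<Rightarrow> nat \<Rightarrow> lc set" and X :: "nat \<Rightarrow> lc set" and t :: "nat \<Rightarrow> lc"
  assumes cov: "\<And>k. lc_cover (S k) (X k)"
    and sums: "\<And>k. lc_sums (\<lambda>i. len (S k i)) (t k)"
    and small: "\<forall>q. \<exists>K. \<forall>k\<ge>K. sm q (t k)"
  shows "\<exists>T u. lc_cover T (\<Union>k. X k) \<and> lc_sums (\<lambda>j. len (T j)) u \<and>
            (\<forall>J. \<exists>K. (\<Sum>j<J. len (T j)) \<le> (\<Sum>k<K. t k))"
proof -
  define T where "T j = S (fst (prod_decode j)) (snd (prod_decode j))" for j
  have nn: "0 \<le> len (S k i)" for k i using cover_nonneg[OF cov] .
  have Tint: "\<forall>j. lc_is_interval (T j)" using cov unfolding T_def lc_cover_def by blast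
  have Tun: "(\<Union>k. X k) \<subseteq> (\<Union>j. T j)"
  proof
    fix x assume "x \<in> (\<Union>k. X k)"
    then obtain k where "x \<in> X k" by blast
    then obtain i where "x \<in> S k i" using cov unfolding lc_cover_def by blast
    then have "x \<in> T (prod_encode (k, i))" unfolding T_def by simp
    then show "x \<in> (\<Union>j. T j)" by blast
  qed
  have terms: "\<forall>q. \<exists>N. \<forall>n\<ge>N. sm q (len (T n))"
  proof
    fix q
    obtain K where K: "\<forall>k\<ge>K. sm q (t k)" using small by blast
    have "\<forall>k. \<exists>I. \<forall>i\<ge>I. sm q (len (S k i))" using sums_terms[OF sums] by blast
    then obtain I where I: "\<And>k i. i \<ge> I k \<Longrightarrow> sm q (len (S k i))" by metis
    define B where "B = prod_encode ` (\<Union>k<K. {k} \<times> {..<I k})"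
    have "finite B" unfolding B_def by auto
    then obtain J where J: "\<forall>j\<ge>J. j \<notin> B" using finite_nat_bound by blast
    show "\<exists>N. \<forall>n\<ge>N. sm q (len (T n))"
    proof (intro exI allI impI)
      fix j assume "J \<le> j"
      then have nb: "j \<notin> B" using J by blast
      obtain k i where ki: "prod_decode j = (k, i)" by (cases "prod_decode j")
      then have jeq: "j = prod_encode (k, i)" by (metis prod_decode_inverse)
      show "sm q (len (T j))"
      proof (cases "k < K")
        case True
        then have "\<not> i < I k" using nb jeq unfolding B_def by blast
        then show ?thesis using I ki unfolding T_def by simp
      next
        case False
        then have "sm q (t k)" using K by simp
        moreover have "len (S k i) \<le> t k" using term_le_sum[OF sums] nn by blast
        ultimately show ?thesis using sm_convex nn ki unfolding T_def by simp
      qed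
    qed
  qed
  obtain u where u: "lc_sums (\<lambda>j. len (T j)) u" using complete_series[OF terms] by blast
  have bound: "\<exists>K. (\<Sum>j<J. len (T j)) \<le> (\<Sum>k<K. t k)" for J
  proof -
    define D where "D = prod_decode ` {..<J}"
    have finD: "finite D" unfolding D_def by simp
    obtain K where K: "\<forall>p\<in>D. fst p < K" using finD
      by (metis finite_nat_set_iff_bounded finite_imageI image_iff)
    obtain I where I: "\<forall>p\<in>D. snd p < I" using finD
      by (metis finite_nat_set_iff_bounded finite_imageI image_iff)
    have "(\<Sum>j<J. len (T j)) = (\<Sum>p\<in>D. len (S (fst p) (snd p)))"
      unfolding D_def T_def by (subst sum.reindex) (auto intro: inj_on_subset[OF inj_prod_decode])
    also have "\<dots> \<le> (\<Sum>p\<in>{..<K} \<times> {..<I}. len (S (fst p) (snd p)))"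
      by (rule sum_mono2) (use K I nn in auto)
    also have "\<dots> = (\<Sum>k<K. \<Sum>i<I. len (S k i))"
      by (simp add: sum.cartesian_product split_beta)
    also have "\<dots> \<le> (\<Sum>k<K. t k)"
      by (rule sum_mono) (use sums_partial_le[OF sums] nn in blast)
    finally show ?thesis by blast
  qed
  show ?thesis
    using Tint Tun u bound unfolding lc_cover_def by blast
qed

lemma union2:
  assumes "t1 \<in> cover_sums A" "t2 \<in> cover_sums B"
  shows "\<exists>u\<in>cover_sums (A \<union> B). u \<le> t1 + t2"
proof -
  obtain S1 where S1: "lc_cover S1 A" "lc_sums (\<lambda>n. len (S1 n)) t1" using assms(1) by (rule cs_elim)
  obtain S2 where S2: "lc_cover S2 B" "lc_sums (\<lambda>n. len (S2 n)) t2" using assms(2) by (rule cs_elim)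
  define T where "T j = (if even j then S1 (j div 2) else S2 (j div 2))" for j
  have nn1: "0 \<le> len (S1 i)" for i using cover_nonneg[OF S1(1)] .
  have nn2: "0 \<le> len (S2 i)" for i using cover_nonneg[OF S2(1)] .
  have nn: "0 \<le> len (T j)" for j unfolding T_def using nn1 nn2 by simp
  have Tint: "\<forall>j. lc_is_interval (T j)" using S1 S2 unfolding T_def lc_cover_def by simp
  have Tun: "A \<union> B \<subseteq> (\<Union>j. T j)"
  proof
    fix x assume "x \<in> A \<union> B"
    then show "x \<in> (\<Union>j. T j)"
    proof
      assume "x \<in> A"
      then obtain i where "x \<in> S1 i" using S1 unfolding lc_cover_def by blast
      then have "x \<in> T (2 * i)" unfolding T_def by simp
      then show ?thesis by blast
    next
      assume "x \<in> B"
      then obtain i where "x \<in> S2 i" using S2 unfolding lc_cover_def by blast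
      then have "x \<in> T (2 * i + 1)" unfolding T_def by simp
      then show ?thesis by blast
    qed
  qed
  have terms: "\<forall>q. \<exists>N. \<forall>n\<ge>N. sm q (len (T n))"
  proof
    fix q
    obtain N1 where N1: "\<forall>n\<ge>N1. sm q (len (S1 n))" using sums_terms[OF S1(2)] by blast
    obtain N2 where N2: "\<forall>n\<ge>N2. sm q (len (S2 n))" using sums_terms[OF S2(2)] by blast
    show "\<exists>N. \<forall>n\<ge>N. sm q (len (T n))"
    proof (intro exI allI impI)
      fix n assume "2 * (N1 + N2) \<le> n"
      then have "N1 \<le> n div 2" "N2 \<le> n div 2" by auto
      then show "sm q (len (T n))" unfolding T_def using N1 N2 by simp
    qed
  qed
  obtain u where u: "lc_sums (\<lambda>j. len (T j)) u" using complete_series[OF terms] by blast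
  have ev: "(\<Sum>j<2 * n. len (T j)) = (\<Sum>i<n. len (S1 i)) + (\<Sum>i<n. len (S2 i))" for n
  proof (induction n)
    case (Suc n)
    have "(\<Sum>j<2 * Suc n. len (T j)) = (\<Sum>j<2 * n. len (T j)) + len (T (2 * n)) + len (T (2 * n + 1))"
      by simp
    also have "\<dots> = (\<Sum>i<Suc n. len (S1 i)) + (\<Sum>i<Suc n. len (S2 i))"
      using Suc unfolding T_def by (simp add: algebra_simps)
    finally show ?case .
  qed simp
  have "(\<Sum>j<J. len (T j)) \<le> t1 + t2" for J
  proof -
    have "(\<Sum>j<J. len (T j)) \<le> (\<Sum>j<2 * J. len (T j))"
      by (rule sum_mono2) (use nn in auto)
    also have "\<dots> \<le> t1 + t2" unfolding ev
      by (intro add_mono sums_partial_le S1(2) S2(2)) (use nn1 nn2 in auto)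
    finally show ?thesis .
  qed
  then have "u \<le> t1 + t2" using sums_le_bound[OF u] by blast
  moreover have "u \<in> cover_sums (A \<union> B)"
    by (rule cs_intro[OF _ u]) (use Tint Tun u in \<open>auto simp: lc_cover_def\<close>)
  ultimately show ?thesis by blast
qed



lemma conv_const: "conv (\<lambda>_. c) c" unfolding conv_def by simp

lemma comb:
  fixes S :: "nat \<Rightarrow> lc set" and a b :: "nat \<Rightarrow> lc"
  assumes ab: "\<And>n. a n < b n \<and> len (S n) = b n - a n \<and> (\<forall>x\<in>S n. a n \<le> x \<and> x \<le> b n)"
  shows "finite F \<Longrightarrow> u \<le> v \<Longrightarrow>
    (\<forall>x y. u \<le> x \<longrightarrow> x < y \<longrightarrow> y \<le> v \<longrightarrow> (\<forall>z. x < z \<and> z < y \<longrightarrow> (\<forall>n\<in>F. z \<notin> S n)) \<longrightarrow> sm q (y - x))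
    \<Longrightarrow> \<exists>w. sm q w \<and> v - u \<le> (\<Sum>n\<in>F. len (S n)) + w"
proof (induction F arbitrary: u rule: finite_psubset_induct)
  case (psubset F)
  note fin = psubset.hyps(1)
  note IH = psubset.IH
  note uv = psubset.prems(1)
  note gap = psubset.prems(2)
  have nn: "0 \<le> len (S n)" for n using ab[of n] by (simp add: less_imp_le)
  have sumF_ge: "len (S n) \<le> (\<Sum>n\<in>F. len (S n))" if "n \<in> F" for n
  proof -
    have "(\<Sum>n\<in>F. len (S n)) = len (S n) + (\<Sum>n\<in>F - {n}. len (S n))"
      using fin that by (simp add: sum.remove)
    moreover have "0 \<le> (\<Sum>n\<in>F - {n}. len (S n))" by (rule sum_nonneg) (use nn in auto)
    ultimately show ?thesis by simp
  qed
  have step: "\<exists>w. sm q w \<and> v - m \<le> (\<Sum>n\<in>F. len (S n)) + w"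
    if k: "k \<in> F" "a k \<le> m" "m < b k" "u \<le> m" "m \<le> v" for k m
  proof (cases "v \<le> b k")
    case True
    have "v - m \<le> b k - a k" using True k by (simp add: diff_mono)
    also have "\<dots> \<le> (\<Sum>n\<in>F. len (S n))" using sumF_ge[OF k(1)] ab[of k] by simp
    finally show ?thesis by (intro exI[of _ 0]) simp
  next
    case False
    then have bv: "b k \<le> v" by simp
    have sub: "F - {k} \<subset> F" using k(1) by blast
    have gap': "\<forall>x y. b k \<le> x \<longrightarrow> x < y \<longrightarrow> y \<le> v \<longrightarrow>
        (\<forall>z. x < z \<and> z < y \<longrightarrow> (\<forall>n\<in>F - {k}. z \<notin> S n)) \<longrightarrow> sm q (y - x)"
    proof (intro allI impI)
      fix x y assume h: "b k \<le> x" "x < y" "y \<le> v" "\<forall>z. x < z \<and> z < y \<longrightarrow> (\<forall>n\<in>F - {k}. z \<notin> S n)"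
      have "\<forall>z. x < z \<and> z < y \<longrightarrow> (\<forall>n\<in>F. z \<notin> S n)"
      proof (intro allI impI ballI)
        fix z n assume z: "x < z \<and> z < y" and n: "n \<in> F"
        show "z \<notin> S n"
        proof (cases "n = k")
          case True
          then show ?thesis using ab[of k] z h(1) by auto
        next
          case False then show ?thesis using h(4) z n by blast
        qed
      qed
      moreover have "u \<le> x" using h(1) k by simp
      ultimately show "sm q (y - x)" using gap h by blast
    qed
    obtain w where w: "sm q w" "v - b k \<le> (\<Sum>n\<in>F - {k}. len (S n)) + w"
      using IH[OF sub bv gap'] by blast
    have sF: "(\<Sum>n\<in>F. len (S n)) = len (S k) + (\<Sum>n\<in>F - {k}. len (S n))"
      using fin k(1) by (simp add: sum.remove)
    have "v - m = (v - b k) + (b k - m)" by simp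
    also have "\<dots> \<le> ((\<Sum>n\<in>F - {k}. len (S n)) + w) + (b k - a k)"
      using w(2) k(2) by (intro add_mono) (auto simp: diff_mono)
    also have "\<dots> = (\<Sum>n\<in>F. len (S n)) + w" using sF ab[of k] by (simp add: algebra_simps)
    finally show ?thesis using w(1) by blast
  qed
  show ?case
  proof (cases "\<exists>k\<in>F. a k \<le> u \<and> u < b k")
    case True
    then obtain k where "k \<in> F" "a k \<le> u" "u < b k" by blast
    then show ?thesis using step[of k u] uv by simp
  next
    case False
    define A' where "A' = {a n | n. n \<in> F \<and> u < a n}"
    have finA: "finite A'" unfolding A'_def using fin by simp
    define m where "m = (if A' = {} then v else min v (Min A'))"
    have um: "u \<le> m" unfolding m_def using uv finA by (auto simp: A'_def)
    have mv: "m \<le> v" unfolding m_def by simp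
    have gapm: "\<forall>z. u < z \<and> z < m \<longrightarrow> (\<forall>n\<in>F. z \<notin> S n)"
    proof (intro allI impI ballI)
      fix z n assume z: "u < z \<and> z < m" and n: "n \<in> F"
      show "z \<notin> S n"
      proof
        assume zs: "z \<in> S n"
        then have "a n \<le> z" "z \<le> b n" using ab[of n] by auto
        show False
        proof (cases "a n \<le> u")
          case True
          then have "b n \<le> u" using False n by auto
          then have "z \<le> u" using \<open>z \<le> b n\<close> by (rule order_trans[rotated])
          then show False using z by (meson not_le)
        next
          case False
          then have "a n \<in> A'" unfolding A'_def using n by auto
          then have "Min A' \<le> a n" "A' \<noteq> {}" using finA by auto
          then have "m \<le> a n" unfolding m_def by (simp add: min.coboundedI2)
          then show False using \<open>a n \<le> z\<close> z by (meson order_trans not_le)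
        qed
      qed
    qed
    have smm: "sm q (m - u)"
    proof (cases "u < m")
      case True then show ?thesis using gap gapm mv by blast
    next
      case False then have "m = u" using um by simp
      then show ?thesis by simp
    qed
    show ?thesis
    proof (cases "m = v")
      case True
      have "v - u \<le> (\<Sum>n\<in>F. len (S n)) + (m - u)"
        using True by (simp add: sum_nonneg nn)
      then show ?thesis using smm by blast
    next
      case False
      then have ne: "A' \<noteq> {}" unfolding m_def by auto
      then have mA: "m = Min A'" using False unfolding m_def by (auto simp: min_def)
      have "m \<in> A'" using finA ne mA by simp
      then obtain k where k: "k \<in> F" "u < a k" "m = a k" unfolding A'_def by blast
      have "m < v" using False mv by simp
      obtain w where w: "sm q w" "v - m \<le> (\<Sum>n\<in>F. len (S n)) + w"
        using step[of k m] k ab[of k] um \<open>m < v\<close> by (auto simp: less_imp_le)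
      have "v - u = (v - m) + (m - u)" by simp
      also have "\<dots> \<le> (\<Sum>n\<in>F. len (S n)) + (w + (m - u))" using w(2) by (simp add: algebra_simps)
      finally show ?thesis using sm_add[OF w(1) smm] by blast
    qed
  qed
qed



lemma mon_diff: "(x + mon c1 p) - (x + mon c2 p) = mon (c1 - c2) p"
  by (rule lc_eqI) (simp add: coeff_mon)

lemma gap_sm:
  fixes S :: "nat \<Rightarrow> lc set"
  assumes I: "betw u v I" and cov: "I \<subseteq> (\<Union>n. S n)"
    and smF: "\<And>n. n \<notin> F \<Longrightarrow> sm q (len (S n))"
    and ints: "\<And>n. lc_is_interval (S n)"
    and xy: "u \<le> x" "x < y" "y \<le> v"
    and gap: "\<forall>z. x < z \<and> z < y \<longrightarrow> (\<forall>n\<in>F. z \<notin> S n)"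
  shows "sm q (y - x)"
proof (rule ccontr)
  assume ns: "\<not> sm q (y - x)"
  define d where "d = y - x"
  have d: "0 < d" using xy unfolding d_def by simp
  define p where "p = lead d"
  define c0 where "c0 = coeff d p"
  have pc: "0 < c0" "\<forall>r<p. coeff d r = 0" using pos_lead[OF d] unfolding p_def c0_def by auto
  have pq: "p \<le> q"
  proof (rule ccontr)
    assume "\<not> p \<le> q"
    then have "sm q d" unfolding sm_def using pc(2) by auto
    then show False using ns d_def by simp
  qed
  define z where "z c = x + mon c p" for c
  have zin: "x < z c \<and> z c < y" if "c \<in> {0<..<c0}" for c
  proof
    show "x < z c" using mon_pos[of c p] that unfolding z_def by simp
    show "z c < y"
    proof (rule coeff_pos_less[of _ _ p])
      show "0 < coeff (y - z c) p" using that unfolding z_def c0_def d_def by (simp add: coeff_mon)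
      show "\<forall>r<p. coeff (y - z c) r = 0" using pc(2) unfolding z_def d_def by (simp add: coeff_mon)
    qed
  qed
  have ex: "\<exists>n. n \<notin> F \<and> z c \<in> S n" if "c \<in> {0<..<c0}" for c
  proof -
    have "u < z c" "z c < v" using zin[OF that] xy by (auto intro: le_less_trans less_le_trans)
    then have "z c \<in> I" using I unfolding betw_def by blast
    then obtain n where n: "z c \<in> S n" using cov by blast
    moreover have "n \<notin> F" using gap zin[OF that] n by blast
    ultimately show ?thesis by blast
  qed
  define g where "g c = (SOME n. n \<notin> F \<and> z c \<in> S n)" for c
  have g: "g c \<notin> F \<and> z c \<in> S (g c)" if "c \<in> {0<..<c0}" for c
    unfolding g_def using someI_ex[OF ex[OF that]] .
  have "inj_on g {0<..<c0}"
  proof (rule inj_onI)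
    fix c1 c2 assume c1: "c1 \<in> {0<..<c0}" and c2: "c2 \<in> {0<..<c0}" and eq: "g c1 = g c2"
    define n where "n = g c1"
    have m1: "z c1 \<in> S n" "z c2 \<in> S n" "n \<notin> F" using g[OF c1] g[OF c2] eq unfolding n_def by auto
    have smn: "sm p (len (S n))" using smF[OF m1(3)] pq by (rule sm_le_q[rotated])
    have l1: "z c1 - z c2 \<le> len (S n)" by (rule length_diff[OF ints m1(1,2)])
    have l2: "z c2 - z c1 \<le> len (S n)" by (rule length_diff[OF ints m1(2,1)])
    have w: "z c1 - z c2 = mon (c1 - c2) p" unfolding z_def by (rule mon_diff)
    have "sm p (mon (c1 - c2) p)"
    proof (cases "0 \<le> z c1 - z c2")
      case True
      then show ?thesis using sm_convex[OF True l1 smn] w by simp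
    next
      case False
      then have "0 \<le> z c2 - z c1" by simp
      then have "sm p (z c2 - z c1)" using sm_convex l2 smn by blast
      then have "sm p (- (z c1 - z c2))" by simp
      then show ?thesis using w by simp
    qed
    then show "c1 = c2" using not_sm_mon[of "c1 - c2" p] by auto
  qed
  then have "countable {0<..<c0}" unfolding countable_def by blast
  then show False using uncountable_open_interval pc(1) by blast
qed

lemma interval_cover_ge:
  assumes I: "lc_is_interval I" and cov: "lc_cover S I" and s: "lc_sums (\<lambda>n. len (S n)) s"
  shows "len I \<le> s"
proof (rule ccontr)
  assume "\<not> len I \<le> s"
  then have dpos: "0 < len I - s" by simp
  define q where "q = lead (len I - s)"
  obtain u v where uv: "u < v" "len I = v - u" "betw u v I" using interval_props[OF I] by blast
  have ints: "\<And>n. lc_is_interval (S n)" and un: "I \<subseteq> (\<Union>n. S n)" using cov unfolding lc_cover_def by auto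
  have "\<forall>n. \<exists>a b. a < b \<and> len (S n) = b - a \<and> betw a b (S n)" using interval_props[OF ints] by blast
  then obtain a b where ab0: "\<And>n. a n < b n \<and> len (S n) = b n - a n \<and> betw (a n) (b n) (S n)" by metis
  have ab: "\<And>n. a n < b n \<and> len (S n) = b n - a n \<and> (\<forall>x\<in>S n. a n \<le> x \<and> x \<le> b n)"
    using ab0 unfolding betw_def by blast
  define F where "F = {n. \<not> sm q (len (S n))}"
  obtain N where N: "\<forall>n\<ge>N. sm q (len (S n))" using sums_terms[OF s] by blast
  have FN: "F \<subseteq> {..<N}" unfolding F_def using N by (auto simp: not_less[symmetric])
  then have finF: "finite F" by (rule finite_subset) simp
  have gap: "\<forall>x y. u \<le> x \<longrightarrow> x < y \<longrightarrow> y \<le> v \<longrightarrow> (\<forall>z. x < z \<and> z < y \<longrightarrow> (\<forall>n\<in>F. z \<notin> S n)) \<longrightarrow> sm q (y - x)"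
  proof (intro allI impI)
    fix x y assume "u \<le> x" "x < y" "y \<le> v" "\<forall>z. x < z \<and> z < y \<longrightarrow> (\<forall>n\<in>F. z \<notin> S n)"
    then show "sm q (y - x)" using gap_sm[OF uv(3) un, of F q x y] ints unfolding F_def by blast
  qed
  obtain w where w: "sm q w" "v - u \<le> (\<Sum>n\<in>F. len (S n)) + w"
    using comb[OF ab finF _ gap] uv(1) by (auto simp: less_imp_le)
  have nn: "0 \<le> len (S n)" for n using cover_nonneg[OF cov] .
  have "(\<Sum>n\<in>F. len (S n)) \<le> (\<Sum>n<N. len (S n))" by (rule sum_mono2) (use FN nn in auto)
  also have "\<dots> \<le> s" by (rule sums_partial_le[OF s]) (use nn in auto)
  finally have "len I \<le> s + w" using w(2) uv(2) by (metis add_right_mono order_trans)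
  then have "len I - s \<le> w" by (simp add: algebra_simps)
  moreover have "w < len I - s" using sm_lead[of "len I - s" w] w(1) dpos unfolding q_def by blast
  ultimately show False by simp
qed



definition pad :: "lc \<Rightarrow> nat \<Rightarrow> lc" where "pad e k = mon 1 (lead e + 1 + of_nat k)"

lemma pad_pos: "0 < pad e k" unfolding pad_def by (rule mon_pos) simp

lemma pad_sm: "sm (lead e) (pad e k)" unfolding pad_def by (rule sm_mon) simp

lemma pad_sum_sm: "sm (lead e) (\<Sum>k\<in>A. pad e k)" by (rule sm_sum) (rule pad_sm)

lemma pad_small: "\<exists>K. \<forall>k\<ge>K. sm q (pad e k)"
proof -
  obtain K :: nat where K: "q - lead e < of_nat K" using reals_Archimedean2 by blast
  show ?thesis
  proof (intro exI allI impI)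
    fix k assume "K \<le> k"
    then have "(of_nat K :: rat) \<le> of_nat k" by simp
    then have "q < lead e + 1 + of_nat k" using K by linarith
    then show "sm q (pad e k)" unfolding pad_def by (rule sm_mon)
  qed
qed

lemma interval_om:
  assumes I: "lc_is_interval I"
  shows "outer_measurable I \<and> outer_measure I = len I"
proof (rule inf_M, unfold is_inf_iff, intro conjI ballI allI impI)
  fix t assume "t \<in> cover_sums I"
  then obtain S where "lc_cover S I" "lc_sums (\<lambda>n. len (S n)) t" by (rule cs_elim)
  then show "len I \<le> t" using interval_cover_ge[OF I] by blast
next
  fix e :: lc assume e: "0 < e"
  define S where "S n = (if n = 0 then I else {x. 0 \<le> x \<and> x \<le> pad e (n - 1)})" for n
  have Sint: "lc_is_interval (S n)" for n
    unfolding S_def using I closed_interval(1)[OF pad_pos] by simp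
  have Slen: "len (S (Suc n)) = pad e n" for n
    unfolding S_def using closed_interval(2)[OF pad_pos] by simp
  have terms: "\<forall>q. \<exists>N. \<forall>n\<ge>N. sm q (len (S n))"
  proof
    fix q
    obtain K where K: "\<forall>k\<ge>K. sm q (pad e k)" using pad_small by blast
    show "\<exists>N. \<forall>n\<ge>N. sm q (len (S n))"
    proof (intro exI allI impI)
      fix n assume "Suc K \<le> n"
      then obtain m where "n = Suc m" "K \<le> m" by (cases n) auto
      then show "sm q (len (S n))" using K Slen by simp
    qed
  qed
  obtain t where t: "lc_sums (\<lambda>n. len (S n)) t" using complete_series[OF terms] by blast
  have cov: "lc_cover S I" unfolding lc_cover_def
  proof (intro conjI allI)
    show "I \<subseteq> (\<Union>n. S n)" using S_def by auto
  qed (use Sint t in auto)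
  have tin: "t \<in> cover_sums I" by (rule cs_intro[OF cov t])
  have "conv (\<lambda>n. (\<Sum>k<n. len (S k)) + - len I) (t + - len I)"
    using t unfolding sums_iff by (intro conv_add conv_const)
  moreover have "\<forall>n\<ge>1. sm (lead e) ((\<Sum>k<n. len (S k)) + - len I)"
  proof (intro allI impI)
    fix n :: nat assume "1 \<le> n"
    then obtain m where m: "n = Suc m" by (cases n) auto
    have "(\<Sum>k<n. len (S k)) = len (S 0) + (\<Sum>k<m. len (S (Suc k)))"
      unfolding m by (rule sum.lessThan_Suc_shift)
    then have "(\<Sum>k<n. len (S k)) + - len I = (\<Sum>k<m. pad e k)" using Slen by (simp add: S_def)
    then show "sm (lead e) ((\<Sum>k<n. len (S k)) + - len I)" using pad_sum_sm by simp
  qed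
  ultimately have "sm (lead e) (t + - len I)" by (rule conv_sm)
  then have "t - len I < e" using sm_lead e by simp
  then have "t < len I + e" by (simp add: algebra_simps)
  then show "\<exists>t\<in>cover_sums I. t < len I + e" using tin by blast
qed

lemma choose_covers:
  fixes Y :: "nat \<Rightarrow> lc set"
  assumes om: "\<And>k. outer_measurable (Y k)" and e: "0 < e"
  shows "\<exists>S t. \<forall>k. lc_cover (S k) (Y k) \<and> lc_sums (\<lambda>i. len (S k i)) (t k) \<and>
            outer_measure (Y k) \<le> t k \<and> t k < outer_measure (Y k) + pad e k"
proof -
  have "\<forall>k. \<exists>tk\<in>cover_sums (Y k). tk < outer_measure (Y k) + pad e k"
    using M_approx[OF om pad_pos] by (metis M_approx om pad_pos)
  then obtain t where t: "\<And>k. t k \<in> cover_sums (Y k)" "\<And>k. t k < outer_measure (Y k) + pad e k" by metis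
  have "\<forall>k. \<exists>Sk. lc_cover Sk (Y k) \<and> lc_sums (\<lambda>i. len (Sk i)) (t k)"
  proof
    fix k
    obtain Sk where "lc_cover Sk (Y k)" "lc_sums (\<lambda>i. len (Sk i)) (t k)" using t(1)[of k] by (rule cs_elim)
    then show "\<exists>Sk. lc_cover Sk (Y k) \<and> lc_sums (\<lambda>i. len (Sk i)) (t k)" by blast
  qed
  then obtain S where "\<And>k. lc_cover (S k) (Y k) \<and> lc_sums (\<lambda>i. len (S k i)) (t k)" by metis
  then show ?thesis using t M_le[OF om t(1)] by blast
qed

lemma t_small:
  assumes "0 \<le> m" "m \<le> t" "t < m + pad e k" "sm q m" "sm q (pad e k)"
  shows "sm q t"
proof -
  have "0 \<le> t - m" "t - m \<le> pad e k" using assms by (auto simp: algebra_simps less_imp_le)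
  then have "sm q (t - m)" using sm_convex assms(5) by blast
  then have "sm q ((t - m) + m)" using sm_add assms(4) by blast
  then show ?thesis by simp
qed

lemma subadd:
  fixes Y :: "nat \<Rightarrow> lc set"
  assumes omA: "outer_measurable A" and sub: "A \<subseteq> (\<Union>k. Y k)"
    and om: "\<And>k. outer_measurable (Y k)"
    and sig: "lc_sums (\<lambda>k. outer_measure (Y k)) \<sigma>"
  shows "outer_measure A \<le> \<sigma>"
proof (rule le_of_all_eps)
  fix e :: lc assume e: "0 < e"
  obtain S t where St: "\<And>k. lc_cover (S k) (Y k) \<and> lc_sums (\<lambda>i. len (S k i)) (t k) \<and>
            outer_measure (Y k) \<le> t k \<and> t k < outer_measure (Y k) + pad e k"
    using choose_covers[where Y=Y, OF om e] by blast
  have Mnn: "0 \<le> outer_measure (Y k)" for k using M_nonneg[OF om] .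
  have small: "\<forall>q. \<exists>K. \<forall>k\<ge>K. sm q (t k)"
  proof
    fix q
    obtain K1 where K1: "\<forall>k\<ge>K1. sm q (outer_measure (Y k))" using sums_terms[OF sig] by blast
    obtain K2 where K2: "\<forall>k\<ge>K2. sm q (pad e k)" using pad_small by blast
    show "\<exists>K. \<forall>k\<ge>K. sm q (t k)"
    proof (intro exI[of _ "max K1 K2"] allI impI)
      fix k assume "max K1 K2 \<le> k"
      then have "sm q (outer_measure (Y k))" "sm q (pad e k)" using K1 K2 by auto
      then show "sm q (t k)" using t_small[OF Mnn] St by blast
    qed
  qed
  obtain T u where Tu: "lc_cover T (\<Union>k. Y k)" "lc_sums (\<lambda>j. len (T j)) u"
      "\<forall>J. \<exists>K. (\<Sum>j<J. len (T j)) \<le> (\<Sum>k<K. t k)"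
    using merge_covers[of S Y t] St small by blast
  have "u \<in> cover_sums A" using cs_mono[OF sub] cs_intro[OF Tu(1,2)] by blast
  then have Mu: "outer_measure A \<le> u" by (rule M_le[OF omA])
  have "(\<Sum>j<J. len (T j)) \<le> \<sigma> + e" for J
  proof -
    obtain K where K: "(\<Sum>j<J. len (T j)) \<le> (\<Sum>k<K. t k)" using Tu(3) by blast
    also have "\<dots> \<le> (\<Sum>k<K. outer_measure (Y k) + pad e k)"
      by (rule sum_mono) (use St in \<open>auto simp: less_imp_le\<close>)
    also have "\<dots> = (\<Sum>k<K. outer_measure (Y k)) + (\<Sum>k<K. pad e k)" by (simp add: sum.distrib)
    also have "\<dots> \<le> \<sigma> + e"
      by (intro add_mono sums_partial_le[OF sig] less_imp_le[OF sm_lead[OF pad_sum_sm e]]) (use Mnn in auto)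
    finally show ?thesis .
  qed
  then have "u \<le> \<sigma> + e" by (intro sums_le_bound[OF Tu(2)]) blast
  then show "outer_measure A \<le> \<sigma> + e" using Mu by simp
qed

lemma tail_cover:
  fixes Y :: "nat \<Rightarrow> lc set"
  assumes om: "\<And>k. outer_measurable (Y k)"
    and small: "\<forall>q. \<exists>K. \<forall>k\<ge>K. sm q (outer_measure (Y k))"
    and e: "0 < e"
  shows "\<exists>K. \<exists>u\<in>cover_sums (\<Union>k\<in>{K..}. Y k). u < e"
proof -
  obtain S t where St: "\<And>k. lc_cover (S k) (Y k) \<and> lc_sums (\<lambda>i. len (S k i)) (t k) \<and>
            outer_measure (Y k) \<le> t k \<and> t k < outer_measure (Y k) + pad e k"
    using choose_covers[where Y=Y, OF om e] by blast
  have Mnn: "0 \<le> outer_measure (Y k)" for k using M_nonneg[OF om] .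
  have tsm: "\<forall>q. \<exists>K. \<forall>k\<ge>K. sm q (t k)"
  proof
    fix q
    obtain K1 where K1: "\<forall>k\<ge>K1. sm q (outer_measure (Y k))" using small by blast
    obtain K2 where K2: "\<forall>k\<ge>K2. sm q (pad e k)" using pad_small by blast
    show "\<exists>K. \<forall>k\<ge>K. sm q (t k)"
    proof (intro exI[of _ "max K1 K2"] allI impI)
      fix k assume "max K1 K2 \<le> k"
      then have "sm q (outer_measure (Y k))" "sm q (pad e k)" using K1 K2 by auto
      then show "sm q (t k)" using t_small[OF Mnn] St by blast
    qed
  qed
  obtain K where K: "\<forall>k\<ge>K. sm (lead e) (outer_measure (Y k))" using small by blast
  have tK: "sm (lead e) (t k)" if "K \<le> k" for k
    using t_small[OF Mnn _ _ _ pad_sm] St K that by blast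
  have tsm': "\<forall>q. \<exists>K'. \<forall>k\<ge>K'. sm q (t (K + k))"
  proof
    fix q
    obtain K' where "\<forall>k\<ge>K'. sm q (t k)" using tsm by blast
    then show "\<exists>K'. \<forall>k\<ge>K'. sm q (t (K + k))" by (intro exI[of _ K']) auto
  qed
  obtain T u where Tu: "lc_cover T (\<Union>k. Y (K + k))" "lc_sums (\<lambda>j. len (T j)) u"
      "\<forall>J. \<exists>K'. (\<Sum>j<J. len (T j)) \<le> (\<Sum>k<K'. t (K + k))"
    using merge_covers[of "\<lambda>k. S (K + k)" "\<lambda>k. Y (K + k)" "\<lambda>k. t (K + k)"] St tsm' by blast
  have eqU: "(\<Union>k\<in>{K..}. Y k) = (\<Union>k. Y (K + k))"
  proof
    show "(\<Union>k\<in>{K..}. Y k) \<subseteq> (\<Union>k. Y (K + k))"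
    proof
      fix x assume "x \<in> (\<Union>k\<in>{K..}. Y k)"
      then obtain k where "K \<le> k" "x \<in> Y k" by auto
      then have "x \<in> Y (K + (k - K))" by simp
      then show "x \<in> (\<Union>k. Y (K + k))" by blast
    qed
    show "(\<Union>k. Y (K + k)) \<subseteq> (\<Union>k\<in>{K..}. Y k)"
      by (auto intro!: bexI[of _ "K + _"])
  qed
  have uin: "u \<in> cover_sums (\<Union>k\<in>{K..}. Y k)" unfolding eqU by (rule cs_intro[OF Tu(1,2)])
  have nnT: "0 \<le> len (T j)" for j using cover_nonneg[OF Tu(1)] .
  have "\<forall>J\<ge>0. sm (lead e) (\<Sum>j<J. len (T j))"
  proof (intro allI impI)
    fix J :: nat
    obtain K' where K': "(\<Sum>j<J. len (T j)) \<le> (\<Sum>k<K'. t (K + k))" using Tu(3) by blast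
    have "sm (lead e) (\<Sum>k<K'. t (K + k))" by (rule sm_sum) (use tK in simp)
    then show "sm (lead e) (\<Sum>j<J. len (T j))"
      using sm_convex[OF sum_nonneg K'] nnT by blast
  qed
  then have "sm (lead e) u" using Tu(2) unfolding sums_iff by (rule conv_sm[rotated])
  then have "u < e" using sm_lead e by blast
  then show ?thesis using uin by blast
qed



abbreviation om :: "lc set \<Rightarrow> bool" where "om \<equiv> outer_measurable"
abbreviation M :: "lc set \<Rightarrow> lc" where "M \<equiv> outer_measure"

lemma LmD:
  assumes "L_measurable A" "om B"
  shows "om (A \<inter> B)" "om (- A \<inter> B)" "M B = M (A \<inter> B) + M (- A \<inter> B)"
  using assms unfolding L_measurable_def by blast+

lemma LmD0: "L_measurable A \<Longrightarrow> om A" unfolding L_measurable_def by blast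

lemma ifc:
  assumes omC: "om C" and omY: "om Y" and sub: "C \<subseteq> X \<union> Y"
    and up: "\<forall>e>0. \<exists>t\<in>cover_sums X. t < M C - M Y + e"
  shows "om X \<and> M X = M C - M Y"
proof (rule inf_M, unfold is_inf_iff, intro conjI ballI)
  fix t assume t: "t \<in> cover_sums X"
  show "M C - M Y \<le> t"
  proof (rule le_of_all_eps)
    fix e :: lc assume e: "0 < e"
    obtain t' where t': "t' \<in> cover_sums Y" "t' < M Y + e" using M_approx[OF omY e] by blast
    obtain u where u: "u \<in> cover_sums (X \<union> Y)" "u \<le> t + t'" using union2[OF t t'(1)] by blast
    have "u \<in> cover_sums C" using u(1) cs_mono[OF sub] by blast
    then have "M C \<le> u" by (rule M_le[OF omC])
    also have "\<dots> \<le> t + t'" by (rule u(2))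
    also have "\<dots> \<le> t + (M Y + e)" using t'(2) by (simp add: less_imp_le)
    finally show "M C - M Y \<le> t + e" by (simp add: algebra_simps)
  qed
qed (use up in blast)

lemma three_eps: assumes "0 < e" "a < b + eps e" "c < d + eps e"
  shows "a + c < b + d + e"
proof -
  have "a + c < (b + eps e) + (d + eps e)" using assms(2,3) by (rule add_strict_mono)
  also have "\<dots> = b + d + (eps e + eps e)" by (simp add: algebra_simps)
  also have "\<dots> < b + d + e" using eps2[OF assms(1)] by simp
  finally show ?thesis .
qed

lemma Lm_union:
  assumes A: "L_measurable A" and B: "L_measurable B"
  shows "L_measurable (A \<union> B)"
proof -
  have omA: "om A" using LmD0[OF A] .
  have omB: "om B" using LmD0[OF B] .
  have omAB: "om (- A \<inter> B)" using LmD(2)[OF A omB] .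
  have "om (A \<union> B) \<and> M (A \<union> B) = M A + M (- A \<inter> B)"
  proof (rule inf_M, unfold is_inf_iff, intro conjI ballI allI impI)
    fix t assume "t \<in> cover_sums (A \<union> B)"
    then obtain S where S: "lc_cover S (A \<union> B)" "lc_sums (\<lambda>n. len (S n)) t" by (rule cs_elim)
    have ints: "lc_is_interval (S n)" for n using S(1) unfolding lc_cover_def by blast
    have omS: "om (S n)" and MS: "M (S n) = len (S n)" for n using interval_om[OF ints] by auto
    define Y where "Y n = A \<inter> S n" for n
    define Z where "Z n = B \<inter> (- A \<inter> S n)" for n
    have omY: "om (Y n)" for n unfolding Y_def using LmD(1)[OF A omS] .
    have omAS: "om (- A \<inter> S n)" for n using LmD(2)[OF A omS] .
    have omZ: "om (Z n)" for n unfolding Z_def using LmD(1)[OF B omAS] .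
    have YZ: "M (Y n) + M (Z n) \<le> len (S n)" for n
    proof -
      have "M (Z n) \<le> M (- A \<inter> S n)" unfolding Z_def by (rule M_mono[OF omZ[unfolded Z_def] omAS]) auto
      then have "M (Y n) + M (Z n) \<le> M (A \<inter> S n) + M (- A \<inter> S n)" unfolding Y_def by simp
      also have "\<dots> = len (S n)" using LmD(3)[OF A omS] MS by simp
      finally show ?thesis .
    qed
    have Ynn: "0 \<le> M (Y n)" and Znn: "0 \<le> M (Z n)" for n using M_nonneg omY omZ by auto
    have Yle: "M (Y n) \<le> len (S n)" for n
    proof -
      have "M (Y n) \<le> M (Y n) + M (Z n)" using Znn[of n] by simp
      then show ?thesis using YZ[of n] by (rule order_trans)
    qed
    have Zle: "M (Z n) \<le> len (S n)" for n
    proof -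
      have "M (Z n) \<le> M (Y n) + M (Z n)" using Ynn[of n] by simp
      then show ?thesis using YZ[of n] by (rule order_trans)
    qed
    have lsm: "\<forall>q. \<exists>N. \<forall>n\<ge>N. sm q (len (S n))" using sums_terms[OF S(2)] .
    have "\<forall>q. \<exists>N. \<forall>n\<ge>N. sm q (M (Y n))"
    proof
      fix q obtain N where "\<forall>n\<ge>N. sm q (len (S n))" using lsm by blast
      then show "\<exists>N. \<forall>n\<ge>N. sm q (M (Y n))" using sm_convex[OF Ynn Yle] by blast
    qed
    then obtain su where su: "lc_sums (\<lambda>n. M (Y n)) su" using complete_series[of "\<lambda>n. M (Y n)"] by blast
    have "\<forall>q. \<exists>N. \<forall>n\<ge>N. sm q (M (Z n))"
    proof
      fix q obtain N where "\<forall>n\<ge>N. sm q (len (S n))" using lsm by blast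
      then show "\<exists>N. \<forall>n\<ge>N. sm q (M (Z n))" using sm_convex[OF Znn Zle] by blast
    qed
    then obtain sv where sv: "lc_sums (\<lambda>n. M (Z n)) sv" using complete_series[of "\<lambda>n. M (Z n)"] by blast
    have cov: "A \<union> B \<subseteq> (\<Union>n. S n)" using S(1) unfolding lc_cover_def by blast
    have "A \<subseteq> (\<Union>n. Y n)" unfolding Y_def using cov by blast
    then have MA: "M A \<le> su" by (rule subadd[OF omA _ omY su])
    have "- A \<inter> B \<subseteq> (\<Union>n. Z n)" unfolding Z_def using cov by blast
    then have MB: "M (- A \<inter> B) \<le> sv" by (rule subadd[OF omAB _ omZ sv])
    have "conv (\<lambda>N. (\<Sum>n<N. M (Y n)) + (\<Sum>n<N. M (Z n))) (su + sv)"
      using su sv unfolding sums_iff by (rule conv_add)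
    moreover have "\<forall>N\<ge>0. (\<Sum>n<N. M (Y n)) + (\<Sum>n<N. M (Z n)) \<le> t"
    proof (intro allI impI)
      fix N :: nat
      have "(\<Sum>n<N. M (Y n)) + (\<Sum>n<N. M (Z n)) = (\<Sum>n<N. M (Y n) + M (Z n))" by (simp add: sum.distrib)
      also have "\<dots> \<le> (\<Sum>n<N. len (S n))" by (rule sum_mono) (rule YZ)
      also have "\<dots> \<le> t" by (rule sums_partial_le[OF S(2)]) (use cover_nonneg[OF S(1)] in blast)
      finally show "(\<Sum>n<N. M (Y n)) + (\<Sum>n<N. M (Z n)) \<le> t" .
    qed
    ultimately have "su + sv \<le> t" by (rule conv_le)
    have "M A + M (- A \<inter> B) \<le> su + sv" using MA MB by (rule add_mono)
    then show "M A + M (- A \<inter> B) \<le> t" using \<open>su + sv \<le> t\<close> by (rule order_trans)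
  next
    fix e :: lc assume e: "0 < e"
    obtain t1 where t1: "t1 \<in> cover_sums A" "t1 < M A + eps e" using M_approx[OF omA eps_pos] by blast
    obtain t2 where t2: "t2 \<in> cover_sums (- A \<inter> B)" "t2 < M (- A \<inter> B) + eps e"
      using M_approx[OF omAB eps_pos] by blast
    obtain u where u: "u \<in> cover_sums (A \<union> (- A \<inter> B))" "u \<le> t1 + t2" using union2[OF t1(1) t2(1)] by blast
    have "A \<union> (- A \<inter> B) = A \<union> B" by blast
    then have "u \<in> cover_sums (A \<union> B)" using u(1) by simp
    moreover have "u < M A + M (- A \<inter> B) + e" using u(2) three_eps[OF e t1(2) t2(2)] by simp
    ultimately show "\<exists>t\<in>cover_sums (A \<union> B). t < M A + M (- A \<inter> B) + e" by blast
  qed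
  then have omU: "om (A \<union> B)" by blast
  have test: "om ((A \<union> B) \<inter> C) \<and> om (- (A \<union> B) \<inter> C) \<and>
      M C = M ((A \<union> B) \<inter> C) + M (- (A \<union> B) \<inter> C)" if omC: "om C" for C
  proof -
    have omAC: "om (A \<inter> C)" "om (- A \<inter> C)" and MC: "M C = M (A \<inter> C) + M (- A \<inter> C)"
      using LmD[OF A omC] by auto
    have omBAC: "om (B \<inter> (- A \<inter> C))" "om (- B \<inter> (- A \<inter> C))"
      and MAC: "M (- A \<inter> C) = M (B \<inter> (- A \<inter> C)) + M (- B \<inter> (- A \<inter> C))"
      using LmD[OF B omAC(2)] by auto
    have eqc: "- (A \<union> B) \<inter> C = - B \<inter> (- A \<inter> C)" by blast
    have omc: "om (- (A \<union> B) \<inter> C)" using omBAC(2) eqc by simp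
    have val: "M C - M (- (A \<union> B) \<inter> C) = M (A \<inter> C) + M (B \<inter> (- A \<inter> C))"
      using MC MAC eqc by (simp add: algebra_simps)
    have "om ((A \<union> B) \<inter> C) \<and> M ((A \<union> B) \<inter> C) = M C - M (- (A \<union> B) \<inter> C)"
    proof (rule ifc[OF omC omc])
      show "C \<subseteq> ((A \<union> B) \<inter> C) \<union> (- (A \<union> B) \<inter> C)" by blast
      show "\<forall>e>0. \<exists>t\<in>cover_sums ((A \<union> B) \<inter> C). t < M C - M (- (A \<union> B) \<inter> C) + e"
      proof (intro allI impI)
        fix e :: lc assume e: "0 < e"
        obtain t1 where t1: "t1 \<in> cover_sums (A \<inter> C)" "t1 < M (A \<inter> C) + eps e"
          using M_approx[OF omAC(1) eps_pos] by blast
        obtain t2 where t2: "t2 \<in> cover_sums (B \<inter> (- A \<inter> C))" "t2 < M (B \<inter> (- A \<inter> C)) + eps e"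
          using M_approx[OF omBAC(1) eps_pos] by blast
        obtain u where u: "u \<in> cover_sums ((A \<inter> C) \<union> (B \<inter> (- A \<inter> C)))" "u \<le> t1 + t2"
          using union2[OF t1(1) t2(1)] by blast
        have "(A \<inter> C) \<union> (B \<inter> (- A \<inter> C)) = (A \<union> B) \<inter> C" by blast
        then have "u \<in> cover_sums ((A \<union> B) \<inter> C)" using u(1) by simp
        moreover have "u < M C - M (- (A \<union> B) \<inter> C) + e"
          using u(2) three_eps[OF e t1(2) t2(2)] val by simp
        ultimately show "\<exists>t\<in>cover_sums ((A \<union> B) \<inter> C). t < M C - M (- (A \<union> B) \<inter> C) + e" by blast
      qed
    qed
    then show ?thesis using omc by (simp add: algebra_simps)
  qed
  show ?thesis unfolding L_measurable_def using omU test by blast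
qed

lemma empty_om: "om {} \<and> M {} = 0"
proof (rule inf_M, unfold is_inf_iff, intro conjI ballI allI impI)
  fix t assume "t \<in> cover_sums {}"
  then show "0 \<le> t" by (rule cs_nonneg)
next
  fix e :: lc assume e: "0 < e"
  have "0 < eps e" by (rule eps_pos)
  then have I: "lc_is_interval {x. 0 \<le> x \<and> x \<le> eps e}" "len {x. 0 \<le> x \<and> x \<le> eps e} = eps e"
    using closed_interval by auto
  have omI: "om {x. 0 \<le> x \<and> x \<le> eps e}" "M {x. 0 \<le> x \<and> x \<le> eps e} = eps e"
    using interval_om[OF I(1)] I(2) by auto
  obtain t where t: "t \<in> cover_sums {x. 0 \<le> x \<and> x \<le> eps e}" "t < eps e + eps e"
    using M_approx[OF omI(1) eps_pos, of e] omI(2) by auto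
  then have "t \<in> cover_sums {}" using cs_mono[of "{}"] by blast
  moreover have "t < 0 + e" using t(2) eps2[OF e] by simp
  ultimately show "\<exists>t\<in>cover_sums {}. t < 0 + e" by blast
qed

lemma Lm_empty: "L_measurable {}"
  unfolding L_measurable_def using empty_om by simp

lemma tail_lemma:
  fixes Xn :: "nat \<Rightarrow> lc set"
  assumes om: "\<And>N. om (Xn N)" and sub: "\<And>N. Xn N \<subseteq> X"
    and cv: "conv (\<lambda>N. M (Xn N)) l"
    and tails: "\<forall>e>0. \<exists>K. \<forall>N\<ge>K. \<exists>u\<in>cover_sums (X \<inter> - Xn N). u < e"
  shows "om X \<and> M X = l"
proof (rule inf_M, unfold is_inf_iff, intro conjI ballI allI impI)
  fix t assume t: "t \<in> cover_sums X"
  have "\<forall>N\<ge>0. M (Xn N) \<le> t" using M_le[OF om] cs_mono[OF sub] t by blast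
  then show "l \<le> t" by (rule conv_le[OF cv])
next
  fix e :: lc assume e: "0 < e"
  define e' where "e' = eps e"
  have e': "0 < e'" unfolding e'_def by (rule eps_pos)
  obtain K where K: "\<forall>N\<ge>K. \<exists>u\<in>cover_sums (X \<inter> - Xn N). u < e'" using tails e' by blast
  obtain N2 where N2: "\<forall>N\<ge>N2. sm (lead e') (M (Xn N) - l)" using cv unfolding conv_def by blast
  define N where "N = max K N2"
  obtain u where u: "u \<in> cover_sums (X \<inter> - Xn N)" "u < e'" using K[rule_format, of N] N_def by auto
  have MN: "M (Xn N) - l < e'" using N2 N_def sm_lead e' by auto
  obtain t' where t': "t' \<in> cover_sums (Xn N)" "t' < M (Xn N) + e'" using M_approx[OF om e'] by blast
  obtain w where w: "w \<in> cover_sums ((X \<inter> - Xn N) \<union> Xn N)" "w \<le> u + t'" using union2[OF u(1) t'(1)] by blast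
  have "w \<in> cover_sums X" using w(1) cs_mono[of X "(X \<inter> - Xn N) \<union> Xn N"] by blast
  moreover have "w < l + e"
  proof -
    have "u + t' < e' + (M (Xn N) + e')" using u(2) t'(2) by (rule add_strict_mono)
    also have "\<dots> = (M (Xn N) - l) + l + e' + e'" by (simp add: algebra_simps)
    also have "\<dots> < e' + l + e' + e'" using add_strict_right_mono[OF MN, of "l + e' + e'"] by (simp add: add.assoc)
    also have "\<dots> = l + (e' + e' + e')" by (simp add: algebra_simps)
    also have "\<dots> < l + e" using eps3[OF e] unfolding e'_def by simp
    finally show ?thesis using w(2) by simp
  qed
  ultimately show "\<exists>t\<in>cover_sums X. t < l + e" by blast
qed



theorem mainTheorem19:
  fixes A :: "nat \<Rightarrow> lc set"
  assumes "\<And>n. n \<ge> 1 \<Longrightarrow> L_measurable (A n)"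
    and "\<exists>L. lc_tendsto (\<lambda>N. L_measure (\<Union>n\<in>{1..N}. A n)) L"
  shows "L_measurable (\<Union>n\<in>{1..}. A n)"
proof -
  define U where "U N = (\<Union>n\<in>{1..N}. A n)" for N
  define V where "V = (\<Union>n\<in>{1..}. A n)"
  have U0: "U 0 = {}" unfolding U_def by simp
  have USuc: "U (Suc N) = U N \<union> A (Suc N)" for N
    unfolding U_def by (auto simp: atLeastAtMostSuc_conv)
  have LmU: "L_measurable (U N)" for N
  proof (induction N)
    case 0 then show ?case using U0 Lm_empty by simp
  next
    case (Suc N) then show ?case using USuc Lm_union assms(1)[of "Suc N"] by simp
  qed
  have omU: "om (U N)" for N using LmD0[OF LmU] .
  have Umono: "U N \<subseteq> U N'" if "N \<le> N'" for N N'
  proof -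
    have "{1..N} \<subseteq> {1..N'}" using that by auto
    then show ?thesis unfolding U_def by blast
  qed
  have UV: "U N \<subseteq> V" for N unfolding U_def V_def by auto
  obtain L where cvU: "conv (\<lambda>N. M (U N)) L"
    using assms(2) unfolding tendsto_iff L_measure_def U_def by blast
  define D where "D n = - U n \<inter> U (Suc n)" for n
  have omD: "om (D n)" for n unfolding D_def using LmD(2)[OF LmU omU] .
  have MD: "M (D n) = M (U (Suc n)) - M (U n)" for n
  proof -
    have "M (U (Suc n)) = M (U n \<inter> U (Suc n)) + M (- U n \<inter> U (Suc n))" using LmD(3)[OF LmU omU] .
    moreover have "U n \<inter> U (Suc n) = U n" using Umono[of n "Suc n"] by auto
    ultimately show ?thesis unfolding D_def by (simp add: algebra_simps)
  qed
  have Dsmall: "\<forall>q. \<exists>K. \<forall>k\<ge>K. sm q (M (D k))"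
  proof
    fix q
    obtain N where N: "\<forall>n\<ge>N. sm q (M (U n) - L)" using cvU unfolding conv_def by blast
    show "\<exists>K. \<forall>k\<ge>K. sm q (M (D k))"
    proof (intro exI[of _ N] allI impI)
      fix k assume k: "N \<le> k"
      have h: "sm q (M (U (Suc k)) - L)" "sm q (M (U k) - L)" using N k by auto
      have "sm q ((M (U (Suc k)) - L) - (M (U k) - L))" by (rule sm_diff[OF h])
      then show "sm q (M (D k))" unfolding MD by simp
    qed
  qed
  have tailV: "V \<inter> - U N \<subseteq> (\<Union>k\<in>{N..}. D k)" for N
  proof
    fix x assume x: "x \<in> V \<inter> - U N"
    then obtain n where n: "n \<ge> 1" "x \<in> A n" unfolding V_def by auto
    then have xn: "x \<in> U n" unfolding U_def by auto
    define j where "j = (LEAST j. x \<in> U j)"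
    have xj: "x \<in> U j" unfolding j_def using xn by (rule LeastI)
    then have "j \<noteq> 0" using U0 by (metis empty_iff)
    then obtain k where jk: "j = Suc k" by (cases j) auto
    have xk: "x \<notin> U k" using not_less_Least[of k "\<lambda>j. x \<in> U j"] unfolding j_def[symmetric] jk by simp
    have "N \<le> k"
    proof (rule ccontr)
      assume "\<not> N \<le> k"
      then have "j \<le> N" using jk by simp
      then have "x \<in> U N" using Umono xj by blast
      then show False using x by simp
    qed
    then show "x \<in> (\<Union>k\<in>{N..}. D k)" using xj xk jk unfolding D_def by auto
  qed
  have tailD: "\<exists>K. \<exists>u\<in>cover_sums (\<Union>k\<in>{K..}. D k). u < e" if "0 < e" for e
    using tail_cover[where Y=D, OF omD Dsmall that] .
  have tails: "\<forall>e>0. \<exists>K. \<forall>N\<ge>K. \<exists>u\<in>cover_sums (X \<inter> - Xn N). u < e"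
    if sub: "\<And>N. X \<inter> - Xn N \<subseteq> V \<inter> - U N" for X Xn
  proof (intro allI impI)
    fix e :: lc assume "0 < e"
    then obtain K u where u: "u \<in> cover_sums (\<Union>k\<in>{K..}. D k)" "u < e" using tailD[of e] by blast
    show "\<exists>K. \<forall>N\<ge>K. \<exists>u\<in>cover_sums (X \<inter> - Xn N). u < e"
    proof (intro exI[of _ K] allI impI)
      fix N assume "K \<le> N"
      have "(\<Union>k\<in>{N..}. D k) \<subseteq> (\<Union>k\<in>{K..}. D k)" using \<open>K \<le> N\<close> by (intro UN_mono) auto
      then have "X \<inter> - Xn N \<subseteq> (\<Union>k\<in>{K..}. D k)" using order_trans[OF sub[of N] order_trans[OF tailV[of N]]] by blast
      then have "cover_sums (\<Union>k\<in>{K..}. D k) \<subseteq> cover_sums (X \<inter> - Xn N)" by (rule cs_mono)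
      then show "\<exists>u\<in>cover_sums (X \<inter> - Xn N). u < e" using u by blast
    qed
  qed
  have omV: "om V" using tail_lemma[OF omU UV cvU tails] by blast
  have test: "om (V \<inter> B) \<and> om (- V \<inter> B) \<and> M B = M (V \<inter> B) + M (- V \<inter> B)" if omB: "om B" for B
  proof -
    define UB where "UB N = U N \<inter> B" for N
    have omUB: "om (UB N)" for N unfolding UB_def using LmD(1)[OF LmU omB] .
    define E where "E N = - U N \<inter> (U (Suc N) \<inter> B)" for N
    have omUSB: "om (U (Suc N) \<inter> B)" for N using LmD(1)[OF LmU omB] .
    have omE: "om (E N)" for N unfolding E_def using LmD(2)[OF LmU omUSB] .
    have ME: "M (UB (Suc N)) - M (UB N) = M (E N)" for N
    proof -
      have "M (U (Suc N) \<inter> B) = M (U N \<inter> (U (Suc N) \<inter> B)) + M (- U N \<inter> (U (Suc N) \<inter> B))"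
        using LmD(3)[OF LmU omUSB] .
      moreover have "U N \<inter> (U (Suc N) \<inter> B) = U N \<inter> B" using Umono[of N "Suc N"] by auto
      ultimately show ?thesis unfolding UB_def E_def by (simp add: algebra_simps)
    qed
    have Ele: "M (E N) \<le> M (D N)" for N
      by (rule M_mono[OF omE omD]) (auto simp: E_def D_def)
    have Enn: "0 \<le> M (E N)" for N using M_nonneg[OF omE] .
    have "\<forall>q. \<exists>N. \<forall>n\<ge>N. sm q (M (UB (Suc n)) - M (UB n))"
    proof
      fix q
      obtain K where K: "\<forall>k\<ge>K. sm q (M (D k))" using Dsmall by blast
      show "\<exists>N. \<forall>n\<ge>N. sm q (M (UB (Suc n)) - M (UB n))"
      proof (intro exI[of _ K] allI impI)
        fix n assume "K \<le> n"
        then have "sm q (M (D n))" using K by blast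
        then have "sm q (M (E n))" using sm_convex[OF Enn Ele] by blast
        then show "sm q (M (UB (Suc n)) - M (UB n))" unfolding ME .
      qed
    qed
    then obtain lB where cvB: "conv (\<lambda>N. M (UB N)) lB" using complete_seq[of "\<lambda>N. M (UB N)"] by blast
    have VB: "om (V \<inter> B) \<and> M (V \<inter> B) = lB"
    proof (rule tail_lemma[OF omUB _ cvB tails])
      show "UB N \<subseteq> V \<inter> B" for N unfolding UB_def using UV by auto
      show "V \<inter> B \<inter> - UB N \<subseteq> V \<inter> - U N" for N unfolding UB_def by auto
    qed
    have "om (- V \<inter> B) \<and> M (- V \<inter> B) = M B - M (V \<inter> B)"
    proof (rule ifc[OF omB])
      show "om (V \<inter> B)" using VB by simp
      show "B \<subseteq> (- V \<inter> B) \<union> (V \<inter> B)" by blast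
      show "\<forall>e>0. \<exists>t\<in>cover_sums (- V \<inter> B). t < M B - M (V \<inter> B) + e"
      proof (intro allI impI)
        fix e :: lc assume e: "0 < e"
        define e' where "e' = eps e"
        have e': "0 < e'" unfolding e'_def by (rule eps_pos)
        obtain N where N: "\<forall>n\<ge>N. sm (lead e') (M (UB n) - lB)" using cvB unfolding conv_def by blast
        have "sm (lead e') (lB - M (UB N))" using N sm_minus_commute by auto
        then have d: "lB - M (UB N) < e'" using sm_lead e' by blast
        have omc: "om (- U N \<inter> B)" using LmD(2)[OF LmU omB] .
        have Mc: "M (- U N \<inter> B) = M B - M (UB N)"
          using LmD(3)[OF LmU omB, of N] unfolding UB_def by (simp add: algebra_simps)
        obtain t where t: "t \<in> cover_sums (- U N \<inter> B)" "t < M (- U N \<inter> B) + e'"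
          using M_approx[OF omc e'] by blast
        have "- V \<inter> B \<subseteq> - U N \<inter> B" using UV by auto
        then have "t \<in> cover_sums (- V \<inter> B)" using t(1) cs_mono by blast
        moreover have "t < M B - M (V \<inter> B) + e"
        proof -
          have "t < M B - M (UB N) + e'" using t(2) Mc by simp
          also have "\<dots> = (M B - lB) + (lB - M (UB N)) + e'" by (simp add: algebra_simps)
          also have "\<dots> < (M B - lB) + e' + e'" using add_strict_right_mono[OF add_strict_left_mono[OF d, of "M B - lB"], of e'] .
          also have "\<dots> = (M B - lB) + (e' + e')" by (simp add: algebra_simps)
          also have "\<dots> < (M B - lB) + e" using eps2[OF e] unfolding e'_def by simp
          finally show ?thesis using VB by simp
        qed
        ultimately show "\<exists>t\<in>cover_sums (- V \<inter> B). t < M B - M (V \<inter> B) + e" by blast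
      qed
    qed
    then show ?thesis using VB by (simp add: algebra_simps)
  qed
  show ?thesis unfolding V_def[symmetric] L_measurable_def using omV test by blast
qed


end
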